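(* Let $v_1=b_0^2\int a_0^{-2}g_0^2$ (the asymptotic variance, up to the factor $4\pi$, of $n^{1/2}(\hat b_{\rm EV}-b_0)$ where $\hat b_{\rm EV}=n^{-1}\mathbf y^T\mathbf y-1$), and let $$\sigma_4^2=b_0^2\Big(\frac{2\nu}{\theta_0}\Big)^2\Big(\int a_0^2\big(h_0-\tfrac{2\nu}{\theta_0}\big)^2\Big)^{-1}.$$ Define $I^4_{\delta,b_0,\theta_0}:=v_1/\sigma_4^2$. Then, with $b_0,\theta_0$ fixed, $$I^4_{\delta,b_0,\theta_0}\longrightarrow \mathrm{ineff}(\nu):=\frac{\sqrt\pi}{2}\left(\frac{2\nu+1}{2\nu}\right)^2\frac{\Gamma(\nu+\frac12)^2\,\Gamma(2\nu+\frac12)}{\Gamma(\nu)^2\,\Gamma(2\nu+1)}\quad\text{as }\delta\to0.$$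
   Context: Fix $\nu\ge1/2$. For $\alpha>0$, $\omega\in\mathbb R$ let $g^*_{\nu,\alpha}(\omega)=C_\nu\alpha^{2\nu}(\alpha^2+\omega^2)^{-(\nu+1/2)}$ with $C_\nu=\Gamma(\nu+\frac12)/(\sqrt\pi\,\Gamma(\nu))$. For $\delta,\theta>0$ and $\lambda\in[-\pi,\pi]$ let $g^\delta_{\nu,\theta}(\lambda)=\sum_{k\in\mathbb Z}g^*_{\nu,\delta\theta}(\lambda+2k\pi)$, $h^\delta_{\nu,\theta}=\partial\log g^\delta_{\nu,\theta}/\partial\theta$, and for $b>0$, $a^\delta_{b,\theta}=\dfrac{b\,g^\delta_{\nu,\theta}}{b\,g^\delta_{\nu,\theta}+(2\pi)^{-1}}$. All integrals $\int$ without limits are over $[-\pi,\pi]$ in $\lambda$. Notation: $b_0,\theta_0>0$, $g_0=g^\delta_{\nu,\theta_0}$, $h_0=h^\delta_{\nu,\theta_0}$, $a_0=a^\delta_{b_0,\theta_0}$. The model is $\mathbf y=\mathbf z+\boldsymbol\varepsilon$ with $\mathbf z=(Z(\delta),\dots,Z(n\delta))^T$, $Z$ a zero-mean stationary Gaussian process with spectral density $b_0g^*_{\nu,\theta_0}$ on $\mathbb R$, and $\boldsymbol\varepsilon\sim N(0,I_n)$ independent of $Z$; $\sigma_4^2$ is (up to $4\pi$) the asymptotic variance of the ML estimator of $b_0$ when the microergodic parameter $c_0=b_0\theta_0^{2\nu}$ is known. *)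

theory Defs
  imports "HOL-Analysis.Analysis"
begin

definition C_nu :: "real \<Rightarrow> real" where
  "C_nu \<nu> = Gamma (\<nu> + 1/2) / (sqrt pi * Gamma \<nu>)"

definition g_star :: "real \<Rightarrow> real \<Rightarrow> real \<Rightarrow> real" where
  "g_star \<nu> \<alpha> \<omega> = C_nu \<nu> * \<alpha> powr (2*\<nu>) * (\<alpha>\<^sup>2 + \<omega>\<^sup>2) powr (-(\<nu> + 1/2))"

definition g_delta :: "real \<Rightarrow> real \<Rightarrow> real \<Rightarrow> real \<Rightarrow> real" where
  "g_delta \<nu> \<delta> \<theta> l = (\<Sum>\<^sub>\<infinity>k::int. g_star \<nu> (\<delta>*\<theta>) (l + 2 * of_int k * pi))"

definition h_delta :: "real \<Rightarrow> real \<Rightarrow> real \<Rightarrow> real \<Rightarrow> real" where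
  "h_delta \<nu> \<delta> \<theta> l = deriv (\<lambda>t. ln (g_delta \<nu> \<delta> t l)) \<theta>"

definition a_delta :: "real \<Rightarrow> real \<Rightarrow> real \<Rightarrow> real \<Rightarrow> real \<Rightarrow> real" where
  "a_delta \<nu> \<delta> b \<theta> l =
     b * g_delta \<nu> \<delta> \<theta> l / (b * g_delta \<nu> \<delta> \<theta> l + 1 / (2*pi))"

definition v1 :: "real \<Rightarrow> real \<Rightarrow> real \<Rightarrow> real \<Rightarrow> real" where
  "v1 \<nu> \<delta> b0 \<theta>0 = b0\<^sup>2 * integral {-pi..pi}
     (\<lambda>l. (a_delta \<nu> \<delta> b0 \<theta>0 l) powi (-2) * (g_delta \<nu> \<delta> \<theta>0 l)\<^sup>2)"

definition sigma4_sq :: "real \<Rightarrow> real \<Rightarrow> real \<Rightarrow> real \<Rightarrow> real" where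
  "sigma4_sq \<nu> \<delta> b0 \<theta>0 = b0\<^sup>2 * (2*\<nu>/\<theta>0)\<^sup>2 * inverse (integral {-pi..pi}
     (\<lambda>l. (a_delta \<nu> \<delta> b0 \<theta>0 l)\<^sup>2 * (h_delta \<nu> \<delta> \<theta>0 l - 2*\<nu>/\<theta>0)\<^sup>2))"

definition I4 :: "real \<Rightarrow> real \<Rightarrow> real \<Rightarrow> real \<Rightarrow> real" where
  "I4 \<nu> \<delta> b0 \<theta>0 = v1 \<nu> \<delta> b0 \<theta>0 / sigma4_sq \<nu> \<delta> b0 \<theta>0"

definition ineff :: "real \<Rightarrow> real" where
  "ineff \<nu> = sqrt pi / 2 * ((2*\<nu> + 1) / (2*\<nu>))\<^sup>2 *
     ((Gamma (\<nu> + 1/2))\<^sup>2 * Gamma (2*\<nu> + 1/2)) / ((Gamma \<nu>)\<^sup>2 * Gamma (2*\<nu> + 1))"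

end

theory Submission
  imports Defs "HOL-Real_Asymp.Real_Asymp"
begin

lemma infsum_int_split:
  fixes f :: "int \<Rightarrow> real"
  assumes nn: "\<And>k. f k \<ge> 0"
    and sm: "summable (\<lambda>n. f (int n + 1) + f (-(int n + 1)))"
  shows "infsum f UNIV = f 0 + (\<Sum>n. f (int n + 1) + f (-(int n + 1)))"
proof -
  define a where "a n = f (int n + 1)" for n
  define b where "b n = f (-(int n + 1))" for n
  have sa: "summable a"
    by (rule summable_comparison_test'[OF sm, of 0]) (auto simp: a_def nn add_increasing2)
  have sb: "summable b"
    by (rule summable_comparison_test'[OF sm, of 0]) (auto simp: b_def nn add_increasing)
  have ha: "(a has_sum suminf a) UNIV"
    by (rule sums_nonneg_imp_has_sum) (use sa nn in \<open>auto simp: a_def summable_sums\<close>)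
  have hb: "(b has_sum suminf b) UNIV"
    by (rule sums_nonneg_imp_has_sum) (use sb nn in \<open>auto simp: b_def summable_sums\<close>)
  have inj1: "inj (\<lambda>n::nat. int n + 1)" by (auto simp: inj_def)
  have inj2: "inj (\<lambda>n::nat. -(int n + 1))" by (auto simp: inj_def)
  have h1: "(f has_sum suminf a) (range (\<lambda>n::nat. int n + 1))"
    using ha has_sum_reindex[OF inj1, of f] by (simp add: a_def[abs_def] o_def)
  have h2: "(f has_sum suminf b) (range (\<lambda>n::nat. -(int n + 1)))"
    using hb has_sum_reindex[OF inj2, of f] by (simp add: b_def[abs_def] o_def)
  have h0: "(f has_sum f 0) {0}" by (rule has_sum_finiteI) auto
  have h12: "(f has_sum (suminf a + suminf b)) (range (\<lambda>n::nat. int n + 1) \<union> range (\<lambda>n::nat. -(int n + 1)))"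
    by (rule has_sum_Un_disjoint[OF h1 h2]) auto
  have h012: "(f has_sum (f 0 + (suminf a + suminf b))) ({0} \<union> (range (\<lambda>n::nat. int n + 1) \<union> range (\<lambda>n::nat. -(int n + 1))))"
    by (rule has_sum_Un_disjoint[OF h0 h12]) auto
  have U: "{0} \<union> (range (\<lambda>n::nat. int n + 1) \<union> range (\<lambda>n::nat. -(int n + 1))) = UNIV"
  proof -
    have "k \<in> range (\<lambda>n::nat. int n + 1) \<union> range (\<lambda>n::nat. -(int n + 1))" if "k \<noteq> 0" for k :: int
    proof (cases "k > 0")
      case True
      hence "k = int (nat (k - 1)) + 1" by simp
      thus ?thesis by blast
    next
      case False
      with that have "k = -(int (nat (-k - 1)) + 1)" by simp
      thus ?thesis by blast
    qed
    thus ?thesis by blast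
  qed
  have "infsum f UNIV = f 0 + (suminf a + suminf b)"
    using h012 unfolding U by (rule infsumI)
  also have "suminf a + suminf b = (\<Sum>n. f (int n + 1) + f (-(int n + 1)))"
    using suminf_add[OF sa sb] by (simp add: a_def b_def)
  finally show ?thesis .
qed

lemma C_nu_pos: "\<nu> > 0 \<Longrightarrow> C_nu \<nu> > 0"
proof -
  assume "\<nu> > 0"
  hence "Gamma (\<nu> + 1/2) > 0" "Gamma \<nu> > 0" by (simp_all add: Gamma_real_pos)
  moreover have "sqrt pi > 0" by simp
  ultimately show ?thesis unfolding C_nu_def by (simp add: divide_pos_pos)
qed

lemma g_star_pos: "\<nu> > 0 \<Longrightarrow> \<alpha> > 0 \<Longrightarrow> g_star \<nu> \<alpha> \<omega> > 0"
  unfolding g_star_def by (intro mult_pos_pos C_nu_pos) (auto simp: add_pos_nonneg)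

lemma g_star_le:
  assumes "\<nu> \<ge> 1/2" "\<alpha> > 0" "\<bar>\<omega>\<bar> \<ge> 1"
  shows "g_star \<nu> \<alpha> \<omega> \<le> C_nu \<nu> * \<alpha> powr (2*\<nu>) / \<omega>\<^sup>2"
proof -
  have w1: "\<omega>\<^sup>2 \<ge> 1" using assms(3) by (metis abs_ge_self abs_le_square_iff abs_one one_power2 order_trans)
  have "(\<alpha>\<^sup>2 + \<omega>\<^sup>2) powr (-(\<nu> + 1/2)) \<le> (\<omega>\<^sup>2) powr (-(\<nu> + 1/2))"
    by (rule powr_mono2') (use assms w1 in auto)
  also have "\<dots> \<le> (\<omega>\<^sup>2) powr (-1)"
    by (rule powr_mono) (use assms w1 in auto)
  also have "\<dots> = 1 / \<omega>\<^sup>2" using w1 by (simp add: powr_minus divide_inverse)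
  finally have "(\<alpha>\<^sup>2 + \<omega>\<^sup>2) powr (-(\<nu> + 1/2)) \<le> 1 / \<omega>\<^sup>2" .
  moreover have "C_nu \<nu> * \<alpha> powr (2*\<nu>) \<ge> 0" using C_nu_pos[of \<nu>] assms by simp
  ultimately have "C_nu \<nu> * \<alpha> powr (2*\<nu>) * (\<alpha>\<^sup>2 + \<omega>\<^sup>2) powr (-(\<nu> + 1/2)) \<le> C_nu \<nu> * \<alpha> powr (2*\<nu>) * (1 / \<omega>\<^sup>2)"
    by (metis mult_left_mono)
  thus ?thesis by (simp add: g_star_def)
qed

lemma s1: "(\<alpha>::real)\<^sup>2 + (\<alpha>*u)\<^sup>2 = \<alpha>\<^sup>2 * (1 + u\<^sup>2)" by (simp add: algebra_simps power2_eq_square)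
lemma s2: "(\<alpha>::real) > 0 \<Longrightarrow> (\<alpha>\<^sup>2 * (1 + u\<^sup>2)) powr (-(\<nu> + 1/2)) = (\<alpha>\<^sup>2) powr (-(\<nu> + 1/2)) * (1 + u\<^sup>2) powr (-(\<nu> + 1/2))"
  by (rule powr_mult)
lemma s3: "(\<alpha>::real) > 0 \<Longrightarrow> (\<alpha>\<^sup>2) powr (-(\<nu> + 1/2)) = \<alpha> powr (-(2*\<nu>+1))"
proof -
  assume a: "\<alpha> > 0"
  have "(\<alpha>\<^sup>2) powr (-(\<nu> + 1/2)) = (\<alpha> powr 2) powr (-(\<nu> + 1/2))" using a by (simp add: powr_realpow)
  also have "\<dots> = \<alpha> powr (2 * (-(\<nu> + 1/2)))" by (simp add: powr_powr)
  also have "2 * (-(\<nu> + 1/2)) = -(2*\<nu>+1)" by simp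
  finally show ?thesis .
qed
lemma s4: "(\<alpha>::real) > 0 \<Longrightarrow> \<alpha> powr (2*\<nu>) * \<alpha> powr (-(2*\<nu>+1)) = 1 / \<alpha>"
proof -
  assume a: "\<alpha> > 0"
  have "\<alpha> powr (2*\<nu>) * \<alpha> powr (-(2*\<nu>+1)) = \<alpha> powr (2*\<nu> + (-(2*\<nu>+1)))" by (rule powr_add[symmetric])
  also have "\<dots> = \<alpha> powr (-1)" by simp
  also have "\<dots> = 1 / \<alpha>" using a by (simp add: powr_minus divide_inverse)
  finally show ?thesis .
qed

lemma g_star_scale:
  assumes "\<alpha> > 0"
  shows "g_star \<nu> \<alpha> (\<alpha> * u) = C_nu \<nu> / \<alpha> * (1 + u\<^sup>2) powr (-(\<nu> + 1/2))"
proof -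
  have "g_star \<nu> \<alpha> (\<alpha> * u) = C_nu \<nu> * (\<alpha> powr (2*\<nu>) * \<alpha> powr (-(2*\<nu>+1))) * (1 + u\<^sup>2) powr (-(\<nu> + 1/2))"
    unfolding g_star_def s1 s2[OF assms] s3[OF assms] by (simp add: mult_ac)
  also have "\<dots> = C_nu \<nu> / \<alpha> * (1 + u\<^sup>2) powr (-(\<nu> + 1/2))" unfolding s4[OF assms] by simp
  finally show ?thesis .
qed

lemma g_star_deriv:
  assumes "\<delta> > 0" "t > 0"
  shows "((\<lambda>t. g_star \<nu> (\<delta>*t) \<omega>) has_real_derivative
     (g_star \<nu> (\<delta>*t) \<omega> * (2*\<nu>/t - (2*\<nu>+1)*(\<delta>*t)\<^sup>2/(t*((\<delta>*t)\<^sup>2+\<omega>\<^sup>2))))) (at t)"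
  unfolding g_star_def using assms
  apply (intro derivative_eq_intros refl)
  apply (auto simp: add_pos_nonneg)
  subgoal
  proof -
    define Y where "Y = (\<delta> * t)\<^sup>2 + \<omega>\<^sup>2"
    have Y: "Y > 0" using assms by (simp add: Y_def add_pos_nonneg)
    have p1: "(\<delta> * t) powr (2 * \<nu> - 1) = (\<delta> * t) powr (2 * \<nu>) / (\<delta> * t)"
      using assms by (simp add: powr_diff)
    have p2: "Y powr (- (3 / 2) - \<nu>) = Y powr (- \<nu> - 1 / 2) / Y"
    proof -
      have "- (3 / 2) - \<nu> = (- \<nu> - 1 / 2) - 1" by simp
      thus ?thesis using Y by (simp only: powr_diff) simp
    qed
    define A where "A = (\<delta> * t) powr (2 * \<nu>)"
    define B where "B = Y powr (- \<nu> - 1 / 2)"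
    show ?thesis unfolding Y_def[symmetric] p1 p2 A_def[symmetric] B_def[symmetric] using assms Y
      by (simp add: field_simps power2_eq_square)
  qed
  done

definition w_star :: "real \<Rightarrow> real \<Rightarrow> real \<Rightarrow> real" where
  "w_star \<nu> \<alpha> \<omega> = g_star \<nu> \<alpha> \<omega> * (\<alpha>\<^sup>2 / (\<alpha>\<^sup>2 + \<omega>\<^sup>2))"

definition Qg :: "real \<Rightarrow> real \<Rightarrow> real \<Rightarrow> nat \<Rightarrow> real" where
  "Qg \<nu> \<alpha> l n = g_star \<nu> \<alpha> (l + 2 * (real n + 1) * pi) + g_star \<nu> \<alpha> (l - 2 * (real n + 1) * pi)"

definition Qw :: "real \<Rightarrow> real \<Rightarrow> real \<Rightarrow> nat \<Rightarrow> real" where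
  "Qw \<nu> \<alpha> l n = w_star \<nu> \<alpha> (l + 2 * (real n + 1) * pi) + w_star \<nu> \<alpha> (l - 2 * (real n + 1) * pi)"

definition GG :: "real \<Rightarrow> real \<Rightarrow> real \<Rightarrow> real" where
  "GG \<nu> \<alpha> l = g_star \<nu> \<alpha> l + (\<Sum>n. Qg \<nu> \<alpha> l n)"

definition NN :: "real \<Rightarrow> real \<Rightarrow> real \<Rightarrow> real" where
  "NN \<nu> \<alpha> l = w_star \<nu> \<alpha> l + (\<Sum>n. Qw \<nu> \<alpha> l n)"

definition Zs :: real where "Zs = (\<Sum>n. 1 / (real n + 1)\<^sup>2)"

lemma summable_Z: "summable (\<lambda>n. 1 / (real n + 1)\<^sup>2)"
proof -
  have "summable (\<lambda>n. inverse (real n ^ 2))" by (rule inverse_power_summable) simp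
  hence "summable (\<lambda>n. inverse (real (Suc n) ^ 2))" by (subst summable_Suc_iff)
  thus ?thesis by (simp add: divide_inverse add.commute)
qed

lemma om_bound:
  assumes "\<bar>l\<bar> \<le> pi"
  shows "\<bar>l + 2 * (real n + 1) * pi\<bar> \<ge> real n + 1" "\<bar>l - 2 * (real n + 1) * pi\<bar> \<ge> real n + 1"
    "\<bar>l + 2 * (real n + 1) * pi\<bar> \<ge> \<bar>l\<bar>" "\<bar>l - 2 * (real n + 1) * pi\<bar> \<ge> \<bar>l\<bar>"
proof -
  have p: "pi \<ge> 1" using pi_gt3 by simp
  have "(real n + 1) * 1 \<le> (real n + 1) * pi" using p by (intro mult_left_mono) auto
  hence a: "real n + 1 \<le> (real n + 1) * pi" by simp
  have b: "pi \<le> (real n + 1) * pi" using p by simp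
  show "\<bar>l + 2 * (real n + 1) * pi\<bar> \<ge> real n + 1" "\<bar>l - 2 * (real n + 1) * pi\<bar> \<ge> real n + 1"
    "\<bar>l + 2 * (real n + 1) * pi\<bar> \<ge> \<bar>l\<bar>" "\<bar>l - 2 * (real n + 1) * pi\<bar> \<ge> \<bar>l\<bar>"
    using assms a b by linarith+
qed

lemma sq_ge_of_abs_ge: "\<bar>x::real\<bar> \<ge> y \<Longrightarrow> y \<ge> 0 \<Longrightarrow> x\<^sup>2 \<ge> y\<^sup>2"
  by (metis abs_le_square_iff abs_of_nonneg)

lemma g_star_le_n:
  assumes "\<nu> \<ge> 1/2" "\<alpha> > 0" "\<bar>\<omega>\<bar> \<ge> real n + 1"
  shows "g_star \<nu> \<alpha> \<omega> \<le> C_nu \<nu> * \<alpha> powr (2*\<nu>) / (real n + 1)\<^sup>2"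
proof -
  have "g_star \<nu> \<alpha> \<omega> \<le> C_nu \<nu> * \<alpha> powr (2*\<nu>) / \<omega>\<^sup>2"
    by (rule g_star_le) (use assms in auto)
  also have "\<dots> \<le> C_nu \<nu> * \<alpha> powr (2*\<nu>) / (real n + 1)\<^sup>2"
    by (intro divide_left_mono sq_ge_of_abs_ge mult_nonneg_nonneg) 
       (use assms C_nu_pos[of \<nu>] in auto)
  finally show ?thesis .
qed

lemma Qg_bounds:
  assumes "\<nu> \<ge> 1/2" "\<alpha> > 0" "\<bar>l\<bar> \<le> pi"
  shows "0 \<le> Qg \<nu> \<alpha> l n" "Qg \<nu> \<alpha> l n \<le> 2 * C_nu \<nu> * \<alpha> powr (2*\<nu>) / (real n + 1)\<^sup>2"
proof -
  show "0 \<le> Qg \<nu> \<alpha> l n" unfolding Qg_def using g_star_pos[of \<nu> \<alpha>] assms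
    by (simp add: less_imp_le add_nonneg_nonneg)
  have "g_star \<nu> \<alpha> (l + 2 * (real n + 1) * pi) \<le> C_nu \<nu> * \<alpha> powr (2*\<nu>) / (real n + 1)\<^sup>2"
    by (rule g_star_le_n) (use assms om_bound[OF assms(3)] in auto)
  moreover have "g_star \<nu> \<alpha> (l - 2 * (real n + 1) * pi) \<le> C_nu \<nu> * \<alpha> powr (2*\<nu>) / (real n + 1)\<^sup>2"
    by (rule g_star_le_n) (use assms om_bound[OF assms(3)] in auto)
  ultimately show "Qg \<nu> \<alpha> l n \<le> 2 * C_nu \<nu> * \<alpha> powr (2*\<nu>) / (real n + 1)\<^sup>2"
    unfolding Qg_def by simp
qed

lemma w_star_le:
  assumes "\<nu> > 0" "\<alpha> > 0" "\<bar>\<omega>\<bar> \<ge> \<bar>l\<bar>"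
  shows "0 \<le> w_star \<nu> \<alpha> \<omega>" "w_star \<nu> \<alpha> \<omega> \<le> \<alpha>\<^sup>2 / (\<alpha>\<^sup>2 + l\<^sup>2) * g_star \<nu> \<alpha> \<omega>"
proof -
  have gp: "g_star \<nu> \<alpha> \<omega> > 0" using g_star_pos assms by blast
  show "0 \<le> w_star \<nu> \<alpha> \<omega>" unfolding w_star_def using gp by (simp add: add_nonneg_nonneg)
  have "l\<^sup>2 \<le> \<omega>\<^sup>2" using assms(3) by (simp add: abs_le_square_iff)
  hence "\<alpha>\<^sup>2 / (\<alpha>\<^sup>2 + \<omega>\<^sup>2) \<le> \<alpha>\<^sup>2 / (\<alpha>\<^sup>2 + l\<^sup>2)"
    using assms(2) by (intro divide_left_mono) (auto simp: add_pos_nonneg)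
  thus "w_star \<nu> \<alpha> \<omega> \<le> \<alpha>\<^sup>2 / (\<alpha>\<^sup>2 + l\<^sup>2) * g_star \<nu> \<alpha> \<omega>"
  proof -
    have "g_star \<nu> \<alpha> \<omega> * (\<alpha>\<^sup>2/(\<alpha>\<^sup>2+\<omega>\<^sup>2)) \<le> g_star \<nu> \<alpha> \<omega> * (\<alpha>\<^sup>2/(\<alpha>\<^sup>2+l\<^sup>2))"
      by (rule mult_left_mono) (use gp \<open>\<alpha>\<^sup>2 / (\<alpha>\<^sup>2 + \<omega>\<^sup>2) \<le> \<alpha>\<^sup>2 / (\<alpha>\<^sup>2 + l\<^sup>2)\<close> in auto)
    thus ?thesis unfolding w_star_def by (metis mult.commute)
  qed
qed

lemma Qw_bounds:
  assumes "\<nu> \<ge> 1/2" "\<alpha> > 0" "\<bar>l\<bar> \<le> pi"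
  shows "0 \<le> Qw \<nu> \<alpha> l n" "Qw \<nu> \<alpha> l n \<le> \<alpha>\<^sup>2 / (\<alpha>\<^sup>2 + l\<^sup>2) * Qg \<nu> \<alpha> l n"
proof -
  have nu: "\<nu> > 0" using assms by simp
  note o = om_bound[OF assms(3), of n]
  note a1 = w_star_le[OF nu assms(2) o(3)] and a2 = w_star_le[OF nu assms(2) o(4)]
  show "0 \<le> Qw \<nu> \<alpha> l n" unfolding Qw_def using a1 a2 by simp
  show "Qw \<nu> \<alpha> l n \<le> \<alpha>\<^sup>2 / (\<alpha>\<^sup>2 + l\<^sup>2) * Qg \<nu> \<alpha> l n"
    unfolding Qw_def Qg_def using a1 a2 by (simp add: distrib_left)
qed

lemma summable_Qg:
  assumes "\<nu> \<ge> 1/2" "\<alpha> > 0" "\<bar>l\<bar> \<le> pi"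
  shows "summable (Qg \<nu> \<alpha> l)"
proof (rule summable_comparison_test'[of "\<lambda>n. 2 * C_nu \<nu> * \<alpha> powr (2*\<nu>) * (1 / (real n + 1)\<^sup>2)" 0])
  show "summable (\<lambda>n. 2 * C_nu \<nu> * \<alpha> powr (2*\<nu>) * (1 / (real n + 1)\<^sup>2))"
    by (intro summable_mult summable_Z)
  show "norm (Qg \<nu> \<alpha> l n) \<le> 2 * C_nu \<nu> * \<alpha> powr (2*\<nu>) * (1 / (real n + 1)\<^sup>2)" for n
    using Qg_bounds[OF assms, of n] by simp
qed

lemma summable_Qw:
  assumes "\<nu> \<ge> 1/2" "\<alpha> > 0" "\<bar>l\<bar> \<le> pi"
  shows "summable (Qw \<nu> \<alpha> l)"
proof (rule summable_comparison_test'[of "\<lambda>n. \<alpha>\<^sup>2 / (\<alpha>\<^sup>2 + l\<^sup>2) * Qg \<nu> \<alpha> l n" 0])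
  show "summable (\<lambda>n. \<alpha>\<^sup>2 / (\<alpha>\<^sup>2 + l\<^sup>2) * Qg \<nu> \<alpha> l n)"
    by (intro summable_mult summable_Qg assms)
  show "norm (Qw \<nu> \<alpha> l n) \<le> \<alpha>\<^sup>2 / (\<alpha>\<^sup>2 + l\<^sup>2) * Qg \<nu> \<alpha> l n" for n
    using Qw_bounds[OF assms, of n] by simp
qed

lemma g_delta_GG:
  assumes "\<nu> \<ge> 1/2" "\<delta> * \<theta> > 0" "\<bar>l\<bar> \<le> pi"
  shows "g_delta \<nu> \<delta> \<theta> l = GG \<nu> (\<delta>*\<theta>) l"
proof -
  have nu: "\<nu> > 0" using assms by simp
  define f where "f k = g_star \<nu> (\<delta>*\<theta>) (l + 2 * of_int k * pi)" for k :: int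
  have e1: "f (int n + 1) = g_star \<nu> (\<delta>*\<theta>) (l + 2 * (real n + 1) * pi)" for n
    by (simp add: f_def)
  have e2: "f (-(int n + 1)) = g_star \<nu> (\<delta>*\<theta>) (l - 2 * (real n + 1) * pi)" for n
    by (simp add: f_def algebra_simps)
  have eQ: "(\<lambda>n. f (int n + 1) + f (-(int n + 1))) = Qg \<nu> (\<delta>*\<theta>) l"
    unfolding fun_eq_iff by (simp only: e1 e2 Qg_def) simp
  have "infsum f UNIV = f 0 + (\<Sum>n. f (int n + 1) + f (-(int n + 1)))"
  proof (rule infsum_int_split)
    show "f k \<ge> 0" for k using g_star_pos[OF nu assms(2)] by (simp add: f_def less_imp_le)
    show "summable (\<lambda>n. f (int n + 1) + f (-(int n + 1)))"
      unfolding eQ by (rule summable_Qg[OF assms(1,2,3)])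
  qed
  moreover have "f 0 = g_star \<nu> (\<delta>*\<theta>) l" by (simp add: f_def)
  moreover have "infsum f UNIV = g_delta \<nu> \<delta> \<theta> l" unfolding g_delta_def f_def ..
  ultimately show ?thesis unfolding GG_def eQ by simp
qed

lemma summable_Zc: "summable (\<lambda>n. c / (real n + 1)\<^sup>2)"
  using summable_mult[OF summable_Z, of c] by simp

lemma GG_bounds:
  assumes "\<nu> \<ge> 1/2" "\<alpha> > 0" "\<bar>l\<bar> \<le> pi"
  shows "g_star \<nu> \<alpha> l \<le> GG \<nu> \<alpha> l" "GG \<nu> \<alpha> l \<le> g_star \<nu> \<alpha> l + 2 * C_nu \<nu> * \<alpha> powr (2*\<nu>) * Zs"
    "0 < GG \<nu> \<alpha> l"
proof -
  have s: "summable (Qg \<nu> \<alpha> l)" by (rule summable_Qg[OF assms])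
  have "0 \<le> (\<Sum>n. Qg \<nu> \<alpha> l n)" by (rule suminf_nonneg[OF s]) (use Qg_bounds[OF assms] in auto)
  thus "g_star \<nu> \<alpha> l \<le> GG \<nu> \<alpha> l" unfolding GG_def by simp
  thus "0 < GG \<nu> \<alpha> l" using g_star_pos[of \<nu> \<alpha> l] assms by simp
  have "(\<Sum>n. Qg \<nu> \<alpha> l n) \<le> (\<Sum>n. 2 * C_nu \<nu> * \<alpha> powr (2*\<nu>) * (1 / (real n + 1)\<^sup>2))"
    by (rule suminf_le) (use Qg_bounds[OF assms] s summable_Zc in \<open>auto intro!: summable_mult\<close>)
  also have "\<dots> = 2 * C_nu \<nu> * \<alpha> powr (2*\<nu>) * Zs"
    unfolding Zs_def by (rule suminf_mult[OF summable_Z])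
  finally show "GG \<nu> \<alpha> l \<le> g_star \<nu> \<alpha> l + 2 * C_nu \<nu> * \<alpha> powr (2*\<nu>) * Zs"
    unfolding GG_def by simp
qed

lemma NN_bounds:
  assumes "\<nu> \<ge> 1/2" "\<alpha> > 0" "\<bar>l\<bar> \<le> pi"
  shows "g_star \<nu> \<alpha> l * (\<alpha>\<^sup>2 / (\<alpha>\<^sup>2 + l\<^sup>2)) \<le> NN \<nu> \<alpha> l"
    "NN \<nu> \<alpha> l \<le> \<alpha>\<^sup>2 / (\<alpha>\<^sup>2 + l\<^sup>2) * GG \<nu> \<alpha> l"
proof -
  have s: "summable (Qw \<nu> \<alpha> l)" by (rule summable_Qw[OF assms])
  have sg: "summable (Qg \<nu> \<alpha> l)" by (rule summable_Qg[OF assms])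
  have "0 \<le> (\<Sum>n. Qw \<nu> \<alpha> l n)" by (rule suminf_nonneg[OF s]) (use Qw_bounds[OF assms] in auto)
  thus "g_star \<nu> \<alpha> l * (\<alpha>\<^sup>2 / (\<alpha>\<^sup>2 + l\<^sup>2)) \<le> NN \<nu> \<alpha> l" unfolding NN_def w_star_def by simp
  have "(\<Sum>n. Qw \<nu> \<alpha> l n) \<le> (\<Sum>n. \<alpha>\<^sup>2 / (\<alpha>\<^sup>2 + l\<^sup>2) * Qg \<nu> \<alpha> l n)"
    by (rule suminf_le) (use Qw_bounds[OF assms] s sg in \<open>auto intro!: summable_mult\<close>)
  also have "\<dots> = \<alpha>\<^sup>2 / (\<alpha>\<^sup>2 + l\<^sup>2) * (\<Sum>n. Qg \<nu> \<alpha> l n)"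
    by (rule suminf_mult[OF sg])
  finally have *: "(\<Sum>n. Qw \<nu> \<alpha> l n) \<le> \<alpha>\<^sup>2 / (\<alpha>\<^sup>2 + l\<^sup>2) * (\<Sum>n. Qg \<nu> \<alpha> l n)" .
  have e1: "NN \<nu> \<alpha> l = g_star \<nu> \<alpha> l * (\<alpha>\<^sup>2 / (\<alpha>\<^sup>2 + l\<^sup>2)) + (\<Sum>n. Qw \<nu> \<alpha> l n)"
    unfolding NN_def w_star_def ..
  have e2: "\<alpha>\<^sup>2 / (\<alpha>\<^sup>2 + l\<^sup>2) * GG \<nu> \<alpha> l = g_star \<nu> \<alpha> l * (\<alpha>\<^sup>2 / (\<alpha>\<^sup>2 + l\<^sup>2)) + \<alpha>\<^sup>2 / (\<alpha>\<^sup>2 + l\<^sup>2) * (\<Sum>n. Qg \<nu> \<alpha> l n)"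
    unfolding GG_def by (simp add: distrib_left distrib_right mult.commute add_divide_distrib)
  show "NN \<nu> \<alpha> l \<le> \<alpha>\<^sup>2 / (\<alpha>\<^sup>2 + l\<^sup>2) * GG \<nu> \<alpha> l"
    unfolding e1 e2 using * by linarith
qed

lemma isCont_g_star: "\<alpha> > 0 \<Longrightarrow> isCont (g_star \<nu> \<alpha>) \<omega>"
  unfolding g_star_def[abs_def] by (intro continuous_intros) (auto simp: add_pos_nonneg)

lemma isCont_w_star: "\<alpha> > 0 \<Longrightarrow> isCont (w_star \<nu> \<alpha>) \<omega>"
  unfolding w_star_def[abs_def]
  by (intro continuous_intros isCont_g_star) (auto simp: add_pos_nonneg)

lemma cont_Qg: "\<alpha> > 0 \<Longrightarrow> continuous_on A (\<lambda>l. Qg \<nu> \<alpha> l n)"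
  unfolding Qg_def
  by (intro continuous_intros continuous_on_compose2[OF continuous_at_imp_continuous_on, of UNIV "g_star \<nu> \<alpha>"])
     (auto intro: isCont_g_star)

lemma cont_Qw: "\<alpha> > 0 \<Longrightarrow> continuous_on A (\<lambda>l. Qw \<nu> \<alpha> l n)"
  unfolding Qw_def
  by (intro continuous_intros continuous_on_compose2[OF continuous_at_imp_continuous_on, of UNIV "w_star \<nu> \<alpha>"])
     (auto intro: isCont_w_star)

lemma cont_GG:
  assumes "\<nu> \<ge> 1/2" "\<alpha> > 0"
  shows "continuous_on {-pi..pi} (GG \<nu> \<alpha>)"
proof -
  have ul: "uniform_limit {-pi..pi} (\<lambda>n l. \<Sum>i<n. Qg \<nu> \<alpha> l i) (\<lambda>l. \<Sum>i. Qg \<nu> \<alpha> l i) sequentially"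
    by (rule Weierstrass_m_test[where M="\<lambda>n. 2 * C_nu \<nu> * \<alpha> powr (2*\<nu>) * (1 / (real n + 1)\<^sup>2)"])
       (use Qg_bounds[OF assms] summable_Zc in \<open>auto intro!: summable_mult\<close>)
  have "continuous_on {-pi..pi} (\<lambda>l. \<Sum>i. Qg \<nu> \<alpha> l i)"
    by (rule uniform_limit_theorem[OF _ ul]) (auto intro!: always_eventually continuous_on_sum cont_Qg assms)
  moreover have "continuous_on {-pi..pi} (g_star \<nu> \<alpha>)"
    by (intro continuous_at_imp_continuous_on ballI isCont_g_star assms)
  ultimately show ?thesis unfolding GG_def[abs_def] using continuous_on_add by fastforce
qed

lemma cont_NN:
  assumes "\<nu> \<ge> 1/2" "\<alpha> > 0"
  shows "continuous_on {-pi..pi} (NN \<nu> \<alpha>)"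
proof -
  have b: "norm (Qw \<nu> \<alpha> l n) \<le> 2 * C_nu \<nu> * \<alpha> powr (2*\<nu>) * (1 / (real n + 1)\<^sup>2)"
    if "l \<in> {-pi..pi}" for l n
  proof -
    have l: "\<bar>l\<bar> \<le> pi" using that by auto
    have r: "\<alpha>\<^sup>2 / (\<alpha>\<^sup>2 + l\<^sup>2) \<le> 1" using assms by (simp add: add_pos_nonneg)
    have "Qw \<nu> \<alpha> l n \<le> \<alpha>\<^sup>2 / (\<alpha>\<^sup>2 + l\<^sup>2) * Qg \<nu> \<alpha> l n" by (rule Qw_bounds[OF assms l])
    also have "\<dots> \<le> 1 * Qg \<nu> \<alpha> l n" by (rule mult_right_mono[OF r Qg_bounds(1)[OF assms l]])
    finally show ?thesis using Qw_bounds(1)[OF assms l] Qg_bounds(2)[OF assms l, of n] by simp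
  qed
  have ul: "uniform_limit {-pi..pi} (\<lambda>n l. \<Sum>i<n. Qw \<nu> \<alpha> l i) (\<lambda>l. \<Sum>i. Qw \<nu> \<alpha> l i) sequentially"
    by (rule Weierstrass_m_test[where M="\<lambda>n. 2 * C_nu \<nu> * \<alpha> powr (2*\<nu>) * (1 / (real n + 1)\<^sup>2)"])
       (use b summable_Zc in \<open>auto intro!: summable_mult\<close>)
  have "continuous_on {-pi..pi} (\<lambda>l. \<Sum>i. Qw \<nu> \<alpha> l i)"
    by (rule uniform_limit_theorem[OF _ ul]) (auto intro!: always_eventually continuous_on_sum cont_Qw assms)
  moreover have "continuous_on {-pi..pi} (w_star \<nu> \<alpha>)"
    by (intro continuous_at_imp_continuous_on ballI isCont_w_star assms)
  ultimately show ?thesis unfolding NN_def[abs_def] using continuous_on_add by fastforce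
qed

lemma ratio_le1: "(a::real) > 0 \<Longrightarrow> a\<^sup>2 / (a\<^sup>2 + l\<^sup>2) \<le> 1"
  by (simp add: add_pos_nonneg)

lemma gw_deriv:
  assumes "\<delta> > 0" "t > 0"
  shows "((\<lambda>t. g_star \<nu> (\<delta>*t) \<omega>) has_real_derivative
     (2*\<nu>/t * g_star \<nu> (\<delta>*t) \<omega> - (2*\<nu>+1)/t * w_star \<nu> (\<delta>*t) \<omega>)) (at t)"
proof -
  have Y: "(\<delta>*t)\<^sup>2 + \<omega>\<^sup>2 > 0" using assms by (simp add: add_pos_nonneg)
  have "g_star \<nu> (\<delta>*t) \<omega> * (2*\<nu>/t - (2*\<nu>+1)*(\<delta>*t)\<^sup>2/(t*((\<delta>*t)\<^sup>2+\<omega>\<^sup>2)))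
        = 2*\<nu>/t * g_star \<nu> (\<delta>*t) \<omega> - (2*\<nu>+1)/t * w_star \<nu> (\<delta>*t) \<omega>"
    unfolding w_star_def using assms Y by (simp add: field_simps)
  thus ?thesis using g_star_deriv[OF assms, of \<nu> \<omega>] by simp
qed

lemma h_delta_eq:
  assumes nu: "\<nu> \<ge> 1/2" and d: "\<delta> > 0" and th: "\<theta> > 0" and l: "\<bar>l\<bar> \<le> pi"
  shows "h_delta \<nu> \<delta> \<theta> l = 2*\<nu>/\<theta> - (2*\<nu>+1)/\<theta> * (NN \<nu> (\<delta>*\<theta>) l / GG \<nu> (\<delta>*\<theta>) l)"
proof -
  have nu0: "\<nu> > 0" using nu by simp
  define f where "f n t = Qg \<nu> (\<delta>*t) l n" for n t
  define f' where "f' n t = 2*\<nu>/t * Qg \<nu> (\<delta>*t) l n - (2*\<nu>+1)/t * Qw \<nu> (\<delta>*t) l n" for n t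
  define S where "S = {\<theta>/2..2*\<theta>}"
  have fd: "(f n has_field_derivative f' n t) (at t)" if "t > 0" for n t
  proof -
    note a = gw_deriv[OF d that, of \<nu> "l + 2 * (real n + 1) * pi"]
    note b = gw_deriv[OF d that, of \<nu> "l - 2 * (real n + 1) * pi"]
    have "((\<lambda>t. f n t) has_field_derivative
       ((2*\<nu>/t * g_star \<nu> (\<delta>*t) (l + 2 * (real n + 1) * pi) - (2*\<nu>+1)/t * w_star \<nu> (\<delta>*t) (l + 2 * (real n + 1) * pi))
      + (2*\<nu>/t * g_star \<nu> (\<delta>*t) (l - 2 * (real n + 1) * pi) - (2*\<nu>+1)/t * w_star \<nu> (\<delta>*t) (l - 2 * (real n + 1) * pi)))) (at t)"
      unfolding f_def Qg_def by (rule DERIV_add[OF a b])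
    moreover have "((2*\<nu>/t * g_star \<nu> (\<delta>*t) (l + 2 * (real n + 1) * pi) - (2*\<nu>+1)/t * w_star \<nu> (\<delta>*t) (l + 2 * (real n + 1) * pi))
      + (2*\<nu>/t * g_star \<nu> (\<delta>*t) (l - 2 * (real n + 1) * pi) - (2*\<nu>+1)/t * w_star \<nu> (\<delta>*t) (l - 2 * (real n + 1) * pi))) = f' n t"
      unfolding f'_def Qg_def Qw_def by (simp add: algebra_simps)
    ultimately show ?thesis by (simp add: fun_eq_iff[symmetric])
  qed
  define K where "K = (4*\<nu>+1) * (2/\<theta>) * (2 * C_nu \<nu> * (2*\<delta>*\<theta>) powr (2*\<nu>))"
  have bnd: "norm (f' n t) \<le> K / (real n + 1)\<^sup>2" if "t \<in> S" for n t
  proof -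
    have t: "t > 0" "t \<ge> \<theta>/2" "t \<le> 2*\<theta>" using that th by (auto simp: S_def)
    have a: "\<delta>*t > 0" using d t by simp
    note qg = Qg_bounds[OF nu a l, of n] and qw = Qw_bounds[OF nu a l, of n]
    have r: "(\<delta>*t)\<^sup>2 / ((\<delta>*t)\<^sup>2 + l\<^sup>2) \<le> 1" by (rule ratio_le1[OF a])
    have qwg: "Qw \<nu> (\<delta>*t) l n \<le> Qg \<nu> (\<delta>*t) l n"
      using qw(2) mult_right_mono[OF r qg(1)] by simp
    have "norm (f' n t) \<le> 2*\<nu>/t * Qg \<nu> (\<delta>*t) l n + (2*\<nu>+1)/t * Qw \<nu> (\<delta>*t) l n"
      unfolding f'_def using qg(1) qw(1) t nu by (simp add: abs_le_iff)
    also have "\<dots> \<le> 2*\<nu>/t * Qg \<nu> (\<delta>*t) l n + (2*\<nu>+1)/t * Qg \<nu> (\<delta>*t) l n"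
      using qwg t nu by (intro add_left_mono mult_left_mono) auto
    also have "\<dots> = (4*\<nu>+1)/t * Qg \<nu> (\<delta>*t) l n" using t by (simp add: field_simps)
    also have "\<dots> \<le> (4*\<nu>+1) * (2/\<theta>) * Qg \<nu> (\<delta>*t) l n"
    proof -
      have "1/t \<le> 2/\<theta>" using t th by (simp add: field_simps)
      hence "(4*\<nu>+1)/t \<le> (4*\<nu>+1) * (2/\<theta>)" using nu
        by (metis (no_types, lifting) divide_inverse inverse_eq_divide le_add_same_cancel2 mult_left_mono mult_nonneg_nonneg nu0 order.strict_iff_not zero_le_numeral add_nonneg_nonneg zero_le_one)
      thus ?thesis using qg(1) by (rule mult_right_mono)
    qed
    also have "\<dots> \<le> (4*\<nu>+1) * (2/\<theta>) * (2 * C_nu \<nu> * (2*\<delta>*\<theta>) powr (2*\<nu>) / (real n + 1)\<^sup>2)"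
    proof -
      have "(\<delta>*t) powr (2*\<nu>) \<le> (2*\<delta>*\<theta>) powr (2*\<nu>)"
        using t d nu by (intro powr_mono2) auto
      hence "2 * C_nu \<nu> * (\<delta>*t) powr (2*\<nu>) / (real n + 1)\<^sup>2 \<le> 2 * C_nu \<nu> * (2*\<delta>*\<theta>) powr (2*\<nu>) / (real n + 1)\<^sup>2"
        using C_nu_pos[OF nu0] by (intro divide_right_mono mult_left_mono) auto
      hence "Qg \<nu> (\<delta>*t) l n \<le> 2 * C_nu \<nu> * (2*\<delta>*\<theta>) powr (2*\<nu>) / (real n + 1)\<^sup>2"
        using qg(2) by linarith
      thus ?thesis using nu th by (intro mult_left_mono) auto
    qed
    also have "\<dots> = K / (real n + 1)\<^sup>2" unfolding K_def by simp
    finally show ?thesis .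
  qed
  have uc: "uniformly_convergent_on S (\<lambda>n t. \<Sum>i<n. f' i t)"
    by (rule Weierstrass_m_test'[OF bnd summable_Zc])
  have thS: "\<theta> \<in> S" "\<theta> \<in> interior S" using th by (auto simp: S_def)
  have fdS: "(f n has_field_derivative f' n t) (at t within S)" if "t \<in> S" for n t
    using fd[of t n] that th by (auto simp: S_def intro: has_field_derivative_at_within)
  have sm: "summable (\<lambda>n. f n \<theta>)" unfolding f_def using summable_Qg[OF nu _ l] d th by simp
  note ser = has_field_derivative_series'[OF convex_real_interval(5) fdS[unfolded S_def] uc[unfolded S_def] thS(1)[unfolded S_def] sm thS(2)[unfolded S_def]]
  have D1: "((\<lambda>t. g_star \<nu> (\<delta>*t) l + (\<Sum>n. f n t)) has_field_derivative
      ((2*\<nu>/\<theta> * g_star \<nu> (\<delta>*\<theta>) l - (2*\<nu>+1)/\<theta> * w_star \<nu> (\<delta>*\<theta>) l) + (\<Sum>n. f' n \<theta>))) (at \<theta>)"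
    by (rule DERIV_add[OF gw_deriv[OF d th] ser(2)])
  have ev: "eventually (\<lambda>t. g_star \<nu> (\<delta>*t) l + (\<Sum>n. f n t) = g_delta \<nu> \<delta> t l) (nhds \<theta>)"
  proof -
    have "eventually (\<lambda>t. t \<in> {0<..}) (nhds \<theta>)" using th by (intro eventually_nhds_in_open) auto
    thus ?thesis
    proof eventually_elim
      case (elim t)
      hence "\<delta>*t > 0" using d by simp
      thus ?case using g_delta_GG[OF nu _ l, of \<delta> t] by (simp add: GG_def f_def[abs_def])
    qed
  qed
  define D where "D = (2*\<nu>/\<theta> * g_star \<nu> (\<delta>*\<theta>) l - (2*\<nu>+1)/\<theta> * w_star \<nu> (\<delta>*\<theta>) l) + (\<Sum>n. f' n \<theta>)"
  have D2: "((\<lambda>t. g_delta \<nu> \<delta> t l) has_field_derivative D) (at \<theta>)"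
    using D1 DERIV_cong_ev[OF refl ev refl] unfolding D_def by blast
  have dt: "\<delta>*\<theta> > 0" using d th by simp
  have gpos: "g_delta \<nu> \<delta> \<theta> l > 0" using g_delta_GG[OF nu dt l] GG_bounds(3)[OF nu dt l] by simp
  have D3: "((\<lambda>t. ln (g_delta \<nu> \<delta> t l)) has_field_derivative (1 / g_delta \<nu> \<delta> \<theta> l * D)) (at \<theta>)"
    by (rule DERIV_chain2[OF DERIV_ln_divide[OF gpos] D2])
  have hd: "h_delta \<nu> \<delta> \<theta> l = D / GG \<nu> (\<delta>*\<theta>) l"
    unfolding h_delta_def using DERIV_imp_deriv[OF D3] g_delta_GG[OF nu dt l] by simp
  have sg: "summable (Qg \<nu> (\<delta>*\<theta>) l)" by (rule summable_Qg[OF nu dt l])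
  have sw: "summable (Qw \<nu> (\<delta>*\<theta>) l)" by (rule summable_Qw[OF nu dt l])
  have "(\<Sum>n. f' n \<theta>) = (\<Sum>n. 2*\<nu>/\<theta> * Qg \<nu> (\<delta>*\<theta>) l n) - (\<Sum>n. (2*\<nu>+1)/\<theta> * Qw \<nu> (\<delta>*\<theta>) l n)"
    unfolding f'_def by (rule suminf_diff[symmetric]) (intro summable_mult sg sw)+
  also have "\<dots> = 2*\<nu>/\<theta> * (\<Sum>n. Qg \<nu> (\<delta>*\<theta>) l n) - (2*\<nu>+1)/\<theta> * (\<Sum>n. Qw \<nu> (\<delta>*\<theta>) l n)"
    by (simp only: suminf_mult[OF sg] suminf_mult[OF sw])
  finally have "D = 2*\<nu>/\<theta> * GG \<nu> (\<delta>*\<theta>) l - (2*\<nu>+1)/\<theta> * NN \<nu> (\<delta>*\<theta>) l"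
    unfolding D_def GG_def NN_def by (simp add: algebra_simps)
  moreover have "(a * G - b * N) / G = a - b * (N / G)" if "G > 0" for a b N G :: real
    using that by (simp add: diff_divide_distrib)
  ultimately show ?thesis unfolding hd using GG_bounds(3)[OF nu dt l] by presburger
qed

lemma J_half:
  fixes s :: real
  assumes s: "s > 1/2"
  shows "set_integrable lborel (einterval 0 \<infinity>) (\<lambda>u::real. (1+u\<^sup>2) powr (-s))"
    and "(LBINT u=0..\<infinity>. (1+u\<^sup>2) powr (-s)) = Beta (1/2) (s-1/2) / 2"
proof -
  define g :: "real \<Rightarrow> real" where "g t = sqrt (t/(1-t))" for t
  define g' :: "real \<Rightarrow> real" where "g' t = 1/(2 * sqrt t * (1-t) * sqrt(1-t))" for t
  define f :: "real \<Rightarrow> real" where "f u = (1+u\<^sup>2) powr (-s)" for u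
  define B :: "real \<Rightarrow> real" where "B t = t powr (1/2 - 1) * (1 - t) powr ((s-1/2) - 1)" for t
  have deriv: "DERIV g t :> g' t" if "0 < t" "t < 1" for t
  proof -
    have d: "DERIV g t :> (inverse (sqrt (t/(1-t))) / 2) * ((1*(1-t) - t*(-1))/(1-t)\<^sup>2)"
      unfolding g_def using that
      by (auto intro!: derivative_eq_intros simp: power2_eq_square divide_less_0_iff)
    have "(inverse (sqrt (t/(1-t))) / 2) * ((1*(1-t) - t*(-1))/(1-t)\<^sup>2) = g' t"
    proof -
      have q: "sqrt (1-t) * sqrt (1-t) = 1 - t" using that by simp
      have p1: "sqrt t > 0" "sqrt (1-t) > 0" using that by auto
      have e: "1 - t = sqrt (1-t) * sqrt (1-t)" using q by simp
      have aux: "inverse (a/b)/2 * ((1*(b*b) - t*(-1))/(b*b)\<^sup>2) = 1/(2 * a*(b*b)*b)"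
        if "a > 0" "b > 0" "b*b + t = 1" for a b :: real
        using that by (simp add: field_simps power2_eq_square)
      have "1 - t + t = 1" by simp
      show ?thesis unfolding g'_def real_sqrt_divide
        by (subst (1 2 4) e) (rule aux, use p1 q in auto)

    qed
    with d show ?thesis by simp
  qed
  have fg: "f (g t) * g' t = B t / 2" if "0 < t" "t < 1" for t
  proof -
    have "1 + (g t)\<^sup>2 = 1/(1-t)" using that by (simp add: g_def) (simp add: field_simps)
    hence "f (g t) = (1-t) powr s" using that by (simp add: f_def powr_minus powr_divide)
    moreover have "B t = (1-t) powr s * (t powr (-1/2) * (1-t) powr (-3/2))"
      using that by (simp add: B_def powr_add[symmetric])
    moreover have "t powr (-1/2) = 1/sqrt t" using that by (simp add: powr_minus powr_half_sqrt inverse_eq_divide)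
    moreover have "(1-t) powr (-3/2) = 1/((1-t) * sqrt (1-t))"
    proof -
      have "(1-t) powr (3/2) = (1-t) powr (1 + 1/2)" by simp
      also have "\<dots> = (1-t) powr 1 * (1-t) powr (1/2)" by (rule powr_add)
      finally have "(1-t) powr (3/2) = (1-t) powr 1 * (1-t) powr (1/2)" .
      thus ?thesis using that by (simp add: powr_minus powr_half_sqrt inverse_eq_divide)
    qed
    ultimately show ?thesis by (simp add: g'_def)
  qed
  have intB: "set_integrable lborel {0..1} B"
    unfolding B_def by (rule integrable_Beta) (use s in auto)
  have intB': "set_integrable lborel (einterval 0 1) B"
    by (rule set_integrable_subset[OF intB]) (auto simp: zero_ereal_def one_ereal_def)
  have intfg: "set_integrable lborel (einterval 0 1) (\<lambda>t. f (g t) * g' t)"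
  proof -
    have "set_integrable lborel (einterval 0 1) (\<lambda>t. B t / 2)"
      using intB' by (rule set_integrable_divide)
    thus ?thesis
      by (rule set_integrable_cong[THEN iffD1, rotated -1]) (auto simp: fg zero_ereal_def one_ereal_def)
  qed
  have "((\<lambda>t::real. sqrt (t/(1-t))) \<longlongrightarrow> 0) (at_right 0)"
    by real_asymp
  hence lim0: "((ereal \<circ> g \<circ> real_of_ereal) \<longlongrightarrow> ereal 0) (at_right (ereal 0))"
    unfolding ereal_tendsto_simps g_def[abs_def] .
  have "filterlim (\<lambda>t::real. sqrt (t/(1-t))) at_top (at_left 1)"
    by real_asymp
  hence lim1: "((ereal \<circ> g \<circ> real_of_ereal) \<longlongrightarrow> \<infinity>) (at_left (ereal 1))"
    unfolding ereal_tendsto_simps g_def[abs_def] .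
  note sub = interval_integral_substitution_nonneg[of "ereal 0" "ereal 1" g g' f "ereal 0" \<infinity>]
  have conds: "\<And>x. ereal 0 < ereal x \<Longrightarrow> ereal x < ereal 1 \<Longrightarrow> isCont f (g x)"
    "\<And>x. ereal 0 < ereal x \<Longrightarrow> ereal x < ereal 1 \<Longrightarrow> isCont g' x"
    "\<And>x. ereal 0 < ereal x \<Longrightarrow> ereal x < ereal 1 \<Longrightarrow> 0 \<le> f (g x)"
    "\<And>x. ereal 0 \<le> ereal x \<Longrightarrow> ereal x \<le> ereal 1 \<Longrightarrow> 0 \<le> g' x"
  proof -
    fix x :: real
    show "isCont f (g x)" unfolding f_def[abs_def]
      by (intro continuous_intros) (auto simp: add_nonneg_eq_0_iff)
  next
    fix x :: real assume "ereal 0 < ereal x" "ereal x < ereal 1"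
    hence "0 < x" "x < 1" by auto
    thus "isCont g' x" unfolding g'_def[abs_def]
      by (intro continuous_intros) auto
  next
    fix x show "0 \<le> f (g x)" by (simp add: f_def)
  next
    fix x :: real assume "ereal 0 \<le> ereal x" "ereal x \<le> ereal 1"
    hence "0 \<le> x" "x \<le> 1" by auto
    thus "0 \<le> g' x" unfolding g'_def by simp
  qed
  have intfg': "set_integrable lborel (einterval (ereal 0) (ereal 1)) (\<lambda>t. f (g t) * g' t)"
    using intfg by (simp add: zero_ereal_def one_ereal_def)
  have d': "\<And>x. ereal 0 < ereal x \<Longrightarrow> ereal x < ereal 1 \<Longrightarrow> DERIV g x :> g' x"
    using deriv by simp
  have lt: "ereal 0 < ereal 1" by simp
  note res = sub[OF lt d' conds(1,2,3,4) lim0 lim1 intfg']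
  have feq: "f = (\<lambda>u. (1+u\<^sup>2) powr (-s))" by (simp add: fun_eq_iff f_def)
  have r1: "set_integrable lborel (einterval 0 \<infinity>) f"
    using res(1) by (simp add: zero_ereal_def)
  have r2: "(LBINT x=0..\<infinity>. f x) = (LBINT x=ereal 0..ereal 1. f (g x) * g' x)"
    using res(2) by (simp add: zero_ereal_def)
  show "set_integrable lborel (einterval 0 \<infinity>) (\<lambda>u::real. (1+u\<^sup>2) powr (-s))"
    using r1 by (simp only: feq)
  have "(LBINT x=ereal 0..ereal 1. f (g x) * g' x) = (LBINT x=ereal 0..ereal 1. B x / 2)"
    by (rule interval_integral_cong) (auto simp: fg)
  also have "\<dots> = (LBINT x=ereal 0..ereal 1. B x) / 2" by simp
  also have "(LBINT x=ereal 0..ereal 1. B x) = integral {0..1} B"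
    by (rule interval_integral_eq_integral) (use intB in auto)
  also have "integral {0..1} B = Beta (1/2) (s-1/2)"
    unfolding B_def by (rule integral_unique, rule has_integral_Beta_real) (use s in auto)
  finally show "(LBINT u=0..\<infinity>. (1+u\<^sup>2) powr (-s)) = Beta (1/2) (s-1/2) / 2"
    using r2 by (simp only: feq)
qed

lemma J_full:
  fixes s :: real
  assumes s: "s > 1/2"
  shows "((\<lambda>u::real. (1+u\<^sup>2) powr (-s)) has_integral Beta (1/2) (s-1/2)) UNIV"
proof -
  define \<phi> :: "real \<Rightarrow> real" where "\<phi> u = (1+u\<^sup>2) powr (-s)" for u
  have e: "einterval 0 \<infinity> = {0<..}" by (auto simp: einterval_def zero_ereal_def)
  have i1: "integrable lborel (\<lambda>x. indicator {0<..} x *\<^sub>R \<phi> x)"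
    using J_half(1)[OF s] unfolding e set_integrable_def \<phi>_def[abs_def] .
  have v1: "integral\<^sup>L lborel (\<lambda>x. indicator {0<..} x *\<^sub>R \<phi> x) = Beta (1/2) (s-1/2) / 2"
    using J_half(2)[OF s] unfolding interval_lebesgue_integral_0_infty set_lebesgue_integral_def \<phi>_def[abs_def] .
  have hb: "has_bochner_integral lborel (\<lambda>x. indicator {0<..} x *\<^sub>R \<phi> x) (Beta (1/2) (s-1/2) / 2)"
    using i1 v1 by (simp add: has_bochner_integral_iff)
  have "AE x in lborel. indicator {0<..} x *\<^sub>R \<phi> x = indicator {0..} x *\<^sub>R \<phi> x"
    using AE_lborel_singleton[of 0] by eventually_elim (auto simp: indicator_def)
  hence hb': "has_bochner_integral lborel (\<lambda>x. indicator {0..} x *\<^sub>R \<phi> x) (Beta (1/2) (s-1/2) / 2)"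
    using hb by (subst (asm) has_bochner_integral_cong_AE) (auto simp: \<phi>_def[abs_def])
  have "has_bochner_integral lborel \<phi> (2 *\<^sub>R (Beta (1/2) (s-1/2) / 2))"
    by (rule has_bochner_integral_even_function[OF hb']) (simp add: \<phi>_def)
  hence "has_bochner_integral lborel \<phi> (Beta (1/2) (s-1/2))" by simp
  hence "(\<phi> has_integral (Beta (1/2) (s-1/2))) UNIV"
    using has_integral_integral_lborel has_bochner_integral_iff by metis
  thus ?thesis unfolding \<phi>_def[abs_def] .
qed

lemma DC_right:
  fixes f :: "real \<Rightarrow> real \<Rightarrow> real" and \<phi> \<psi> :: "real \<Rightarrow> real"
  assumes phi: "\<phi> integrable_on UNIV"
    and fi: "\<And>\<alpha>. 0 < \<alpha> \<Longrightarrow> \<alpha> < 1 \<Longrightarrow> f \<alpha> integrable_on UNIV"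
    and le: "\<And>\<alpha> u. 0 < \<alpha> \<Longrightarrow> \<alpha> < 1 \<Longrightarrow> \<bar>f \<alpha> u\<bar> \<le> \<phi> u"
    and lim: "\<And>u. ((\<lambda>\<alpha>. f \<alpha> u) \<longlongrightarrow> \<psi> u) (at_right 0)"
  shows "((\<lambda>\<alpha>. integral UNIV (f \<alpha>)) \<longlongrightarrow> integral UNIV \<psi>) (at_right 0)"
proof (rule tendsto_at_right_sequentially[of 0 1])
  fix S :: "nat \<Rightarrow> real"
  assume S0: "\<And>n. 0 < S n" and S1: "\<And>n. S n < 1" and "decseq S" and St: "S \<longlonglongrightarrow> 0"
  have fS: "filterlim S (at_right 0) sequentially"
    unfolding filterlim_at using S0 St by (auto intro!: always_eventually simp: less_imp_neq[symmetric] order.strict_iff_not)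
  show "(\<lambda>n. integral UNIV (f (S n))) \<longlonglongrightarrow> integral UNIV \<psi>"
  proof (rule dominated_convergence(2)[of "\<lambda>k. f (S k)" UNIV \<phi>])
    show "\<And>k. f (S k) integrable_on UNIV" using fi S0 S1 by auto
    show "\<phi> integrable_on UNIV" by (rule phi)
    show "\<And>k x. x \<in> UNIV \<Longrightarrow> norm (f (S k) x) \<le> \<phi> x" using le S0 S1 by auto
    show "\<And>x. x \<in> UNIV \<Longrightarrow> (\<lambda>k. f (S k) x) \<longlonglongrightarrow> \<psi> x"
      using filterlim_compose[OF lim fS] by auto
  qed
qed simp

lemma integral_cmult_real: "integral S (\<lambda>x. c * f x) = c * integral S (f :: _ \<Rightarrow> real)"
  using integral_cmul[of S c f] by simp

lemma scale_int:
  fixes F :: "real \<Rightarrow> real"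
  assumes a: "\<alpha> > 0" and c: "continuous_on {-pi..pi} F"
  shows "(\<lambda>u. if u \<in> {-pi/\<alpha>..pi/\<alpha>} then F (\<alpha>*u) else 0) integrable_on UNIV"
    "integral {-pi..pi} F = \<alpha> * integral UNIV (\<lambda>u. if u \<in> {-pi/\<alpha>..pi/\<alpha>} then F (\<alpha>*u) else 0)"
proof -
  have i: "F integrable_on {-pi..pi}" by (rule integrable_continuous_interval[OF c])
  have img: "(\<lambda>x. x/\<alpha>) ` {-pi..pi} = {-pi/\<alpha>..pi/\<alpha>}" using a by simp
  have "(\<lambda>x. F(\<alpha>*x)) integrable_on {-pi/\<alpha>..pi/\<alpha>}"
    using integrable_stretch_real[OF i, of \<alpha>] a img by simp
  thus "(\<lambda>u. if u \<in> {-pi/\<alpha>..pi/\<alpha>} then F (\<alpha>*u) else 0) integrable_on UNIV"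
    by (rule iffD2[OF integrable_restrict_UNIV])
  have "integral UNIV (\<lambda>u. if u \<in> {-pi/\<alpha>..pi/\<alpha>} then F (\<alpha>*u) else 0) = integral {-pi/\<alpha>..pi/\<alpha>} (\<lambda>x. F(\<alpha>*x))"
    by (rule integral_restrict_UNIV)
  also have "\<dots> = (1/\<alpha>) * integral {-pi..pi} F"
    using integral_stretch_real[of \<alpha> "-pi" pi F] a img by simp
  finally show "integral {-pi..pi} F = \<alpha> * integral UNIV (\<lambda>u. if u \<in> {-pi/\<alpha>..pi/\<alpha>} then F (\<alpha>*u) else 0)"
    using a by simp
qed

definition phis :: "real \<Rightarrow> real \<Rightarrow> real" where "phis s u = (1 + u\<^sup>2) powr (-s)"

lemma phis_nonneg: "phis s u \<ge> 0" by (simp add: phis_def)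

lemma phis_cont: "continuous_on A (phis s)"
  unfolding phis_def[abs_def] by (intro continuous_intros) (auto simp: add_nonneg_eq_0_iff)

lemma phis_int: "s > 1/2 \<Longrightarrow> phis s integrable_on UNIV" "s > 1/2 \<Longrightarrow> integral UNIV (phis s) = Beta (1/2) (s-1/2)"
  using J_full[of s] unfolding phis_def[abs_def] by (auto simp: has_integral_iff)

lemma phis_sq: "(phis s u)\<^sup>2 = phis (2* s) u"
proof -
  have "(phis s u)\<^sup>2 = phis s u * phis s u" by (simp add: power2_eq_square)
  also have "\<dots> = (1 + u\<^sup>2) powr (-s + -s)" unfolding phis_def by (rule powr_add[symmetric])
  finally show ?thesis by (simp add: phis_def)
qed

lemma phis_2: "phis 2 u = (1 / (1 + u\<^sup>2))\<^sup>2"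
proof -
  have p: "1 + u\<^sup>2 > 0" by (simp add: add_pos_nonneg)
  have "phis 2 u = inverse ((1 + u\<^sup>2) powr 2)" unfolding phis_def by (rule powr_minus)
  also have "(1 + u\<^sup>2) powr 2 = (1 + u\<^sup>2)^2" using p by (simp add: powr_realpow)
  finally show ?thesis by (simp add: power_inverse divide_inverse)
qed

lemma eventually_in_range:
  "eventually (\<lambda>\<alpha>. 0 < \<alpha> \<and> \<alpha> < a \<and> u \<in> {-pi/\<alpha>..pi/\<alpha>}) (at_right 0)" if "a > 0"
proof -
  define m where "m = min a (pi / (\<bar>u\<bar> + 1))"
  have m: "m > 0" unfolding m_def using that by (simp add: add_pos_nonneg)
  have "\<forall>y>0. y < m \<longrightarrow> (0 < y \<and> y < a \<and> u \<in> {-pi/y..pi/y})"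
  proof (intro allI impI)
    fix y :: real assume y: "0 < y" "y < m"
    hence "y < a" "y < pi / (\<bar>u\<bar> + 1)" unfolding m_def by auto
    hence "y * (\<bar>u\<bar> + 1) < pi" by (simp add: field_simps add_pos_nonneg)
    hence "y * \<bar>u\<bar> \<le> pi" using y by (simp add: algebra_simps)
    hence "\<bar>u\<bar> \<le> pi / y" using y by (simp add: field_simps)
    thus "0 < y \<and> y < a \<and> u \<in> {-pi/y..pi/y}" using y \<open>y < a\<close> by auto
  qed
  thus ?thesis unfolding eventually_at_right[OF m] using m by blast
qed

lemma trunc_lim:
  assumes s: "s > 1/2"
  shows "((\<lambda>\<alpha>. integral UNIV (\<lambda>u. if u \<in> {-pi/\<alpha>..pi/\<alpha>} then phis s u else 0)) \<longlongrightarrow> Beta (1/2) (s-1/2)) (at_right 0)"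
proof -
  have "((\<lambda>\<alpha>. integral UNIV (\<lambda>u. if u \<in> {-pi/\<alpha>..pi/\<alpha>} then phis s u else 0)) \<longlongrightarrow> integral UNIV (phis s)) (at_right 0)"
  proof (rule DC_right)
    show "phis s integrable_on UNIV" by (rule phis_int(1)[OF s])
    show "(\<lambda>u. if u \<in> {-pi/\<alpha>..pi/\<alpha>} then phis s u else 0) integrable_on UNIV" for \<alpha>
      by (rule iffD2[OF integrable_restrict_UNIV], rule integrable_continuous_interval, rule phis_cont)
    show "\<bar>if u \<in> {-pi/\<alpha>..pi/\<alpha>} then phis s u else 0\<bar> \<le> phis s u" for \<alpha> u
      by (simp add: phis_nonneg)
    show "((\<lambda>\<alpha>. if u \<in> {-pi/\<alpha>..pi/\<alpha>} then phis s u else 0) \<longlongrightarrow> phis s u) (at_right 0)" for u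
    proof (rule tendsto_eventually)
      show "eventually (\<lambda>\<alpha>. (if u \<in> {-pi/\<alpha>..pi/\<alpha>} then phis s u else 0) = phis s u) (at_right 0)"
        using eventually_in_range[of 1 u, OF zero_less_one] by eventually_elim auto
    qed
  qed
  thus ?thesis using phis_int(2)[OF s] by simp
qed

lemma trunc_le:
  assumes s: "s > 1/2"
  shows "integral UNIV (\<lambda>u. if u \<in> {-pi/\<alpha>..pi/\<alpha>} then phis s u else 0) \<le> Beta (1/2) (s-1/2)"
proof -
  have "integral UNIV (\<lambda>u. if u \<in> {-pi/\<alpha>..pi/\<alpha>} then phis s u else 0) \<le> integral UNIV (phis s)"
  proof (rule integral_le)
    show "(\<lambda>u. if u \<in> {-pi/\<alpha>..pi/\<alpha>} then phis s u else 0) integrable_on UNIV"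
      by (rule iffD2[OF integrable_restrict_UNIV], rule integrable_continuous_interval, rule phis_cont)
  qed (auto simp: phis_int(1)[OF s] phis_nonneg)
  thus ?thesis using phis_int(2)[OF s] by simp
qed

lemma Zs_nonneg: "Zs \<ge> 0"
  unfolding Zs_def by (rule suminf_nonneg[OF summable_Z]) simp

lemma cont_g_star: "\<alpha> > 0 \<Longrightarrow> continuous_on A (g_star \<nu> \<alpha>)"
  by (intro continuous_at_imp_continuous_on ballI isCont_g_star)

lemma int_g_star:
  assumes nu: "\<nu> \<ge> 1/2" and a: "\<alpha> > 0"
  shows "integral {-pi..pi} (g_star \<nu> \<alpha>) \<le> C_nu \<nu> * Beta (1/2) \<nu>"
proof -
  have nu0: "\<nu> > 0" using nu by simp
  have e: "(\<lambda>u. if u \<in> {-pi/\<alpha>..pi/\<alpha>} then g_star \<nu> \<alpha> (\<alpha>*u) else 0) =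
           (\<lambda>u. (C_nu \<nu> / \<alpha>) * (if u \<in> {-pi/\<alpha>..pi/\<alpha>} then phis (\<nu>+1/2) u else 0))"
    by (rule ext) (simp add: g_star_scale[OF a] phis_def)
  have "integral {-pi..pi} (g_star \<nu> \<alpha>) = \<alpha> * ((C_nu \<nu> / \<alpha>) * integral UNIV (\<lambda>u. if u \<in> {-pi/\<alpha>..pi/\<alpha>} then phis (\<nu>+1/2) u else 0))"
    unfolding scale_int(2)[OF a cont_g_star[OF a]] e integral_cmult_real ..
  also have "\<dots> = C_nu \<nu> * integral UNIV (\<lambda>u. if u \<in> {-pi/\<alpha>..pi/\<alpha>} then phis (\<nu>+1/2) u else 0)"
    using a by simp
  also have "\<dots> \<le> C_nu \<nu> * Beta (1/2) \<nu>"
    using trunc_le[of "\<nu>+1/2" \<alpha>] nu0 C_nu_pos[OF nu0] by (intro mult_left_mono) auto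
  finally show ?thesis .
qed

lemma main_V:
  assumes nu: "\<nu> \<ge> 1/2" and a: "\<alpha> > 0"
  shows "\<alpha> * integral {-pi..pi} (\<lambda>l. b\<^sup>2 * (g_star \<nu> \<alpha> l)\<^sup>2) =
    b\<^sup>2 * (C_nu \<nu>)\<^sup>2 * integral UNIV (\<lambda>u. if u \<in> {-pi/\<alpha>..pi/\<alpha>} then phis (2*\<nu>+1) u else 0)"
proof -
  have c: "continuous_on {-pi..pi} (\<lambda>l. b\<^sup>2 * (g_star \<nu> \<alpha> l)\<^sup>2)"
    by (intro continuous_intros cont_g_star[OF a])
  have sq: "(phis (\<nu>+1/2) u)\<^sup>2 = phis (2*\<nu>+1) u" for u
    using phis_sq[of "\<nu>+1/2" u] by (simp add: algebra_simps)
  have e: "(\<lambda>u. if u \<in> {-pi/\<alpha>..pi/\<alpha>} then b\<^sup>2 * (g_star \<nu> \<alpha> (\<alpha>*u))\<^sup>2 else 0) =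
           (\<lambda>u. (b\<^sup>2 * (C_nu \<nu>)\<^sup>2 / \<alpha>\<^sup>2) * (if u \<in> {-pi/\<alpha>..pi/\<alpha>} then phis (2*\<nu>+1) u else 0))"
  proof (rule ext)
    fix u
    have "(g_star \<nu> \<alpha> (\<alpha>*u))\<^sup>2 = (C_nu \<nu>)\<^sup>2 / \<alpha>\<^sup>2 * (phis (\<nu>+1/2) u)\<^sup>2"
      by (simp add: g_star_scale[OF a] phis_def power_mult_distrib power_divide)
    thus "(if u \<in> {-pi/\<alpha>..pi/\<alpha>} then b\<^sup>2 * (g_star \<nu> \<alpha> (\<alpha>*u))\<^sup>2 else 0) =
          (b\<^sup>2 * (C_nu \<nu>)\<^sup>2 / \<alpha>\<^sup>2) * (if u \<in> {-pi/\<alpha>..pi/\<alpha>} then phis (2*\<nu>+1) u else 0)"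
      by (simp add: sq)
  qed
  have s1: "integral {-pi..pi} (\<lambda>l. b\<^sup>2 * (g_star \<nu> \<alpha> l)\<^sup>2) = \<alpha> * integral UNIV (\<lambda>u. if u \<in> {-pi/\<alpha>..pi/\<alpha>} then b\<^sup>2 * (g_star \<nu> \<alpha> (\<alpha>*u))\<^sup>2 else 0)"
    by (rule scale_int(2)[OF a c])
  also have "\<dots> = \<alpha> * ((b\<^sup>2 * (C_nu \<nu>)\<^sup>2 / \<alpha>\<^sup>2) *
      integral UNIV (\<lambda>u. if u \<in> {-pi/\<alpha>..pi/\<alpha>} then phis (2*\<nu>+1) u else 0))"
    unfolding e by (simp only: integral_cmult_real)
  finally have "\<alpha> * integral {-pi..pi} (\<lambda>l. b\<^sup>2 * (g_star \<nu> \<alpha> l)\<^sup>2) = \<alpha> * (\<alpha> * ((b\<^sup>2 * (C_nu \<nu>)\<^sup>2 / \<alpha>\<^sup>2) *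
      integral UNIV (\<lambda>u. if u \<in> {-pi/\<alpha>..pi/\<alpha>} then phis (2*\<nu>+1) u else 0)))" by simp
  also have "\<dots> = b\<^sup>2 * (C_nu \<nu>)\<^sup>2 * integral UNIV (\<lambda>u. if u \<in> {-pi/\<alpha>..pi/\<alpha>} then phis (2*\<nu>+1) u else 0)"
    using a by (simp add: field_simps power2_eq_square)
  finally show ?thesis .
qed

lemma rem_V:
  assumes nu: "\<nu> \<ge> 1/2" and b: "b > 0" and a: "\<alpha> > 0" "\<alpha> < 1"
  defines "c \<equiv> 1/(2*pi)"
  defines "E0 \<equiv> b * (2 * C_nu \<nu> * Zs) + c"
  shows "0 \<le> integral {-pi..pi} (\<lambda>l. (b * GG \<nu> \<alpha> l + c)\<^sup>2 - b\<^sup>2 * (g_star \<nu> \<alpha> l)\<^sup>2)"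
    "integral {-pi..pi} (\<lambda>l. (b * GG \<nu> \<alpha> l + c)\<^sup>2 - b\<^sup>2 * (g_star \<nu> \<alpha> l)\<^sup>2)
       \<le> 2 * b * E0 * (C_nu \<nu> * Beta (1/2) \<nu>) + 2 * pi * E0\<^sup>2"
proof -
  have nu0: "\<nu> > 0" using nu by simp
  have cpos: "c > 0" unfolding c_def by simp
  have ap: "\<alpha> powr (2*\<nu>) \<le> 1" using powr_mono2[of "2*\<nu>" \<alpha> 1] a nu0 by simp
  have pw: "0 \<le> (b * GG \<nu> \<alpha> l + c)\<^sup>2 - b\<^sup>2 * (g_star \<nu> \<alpha> l)\<^sup>2 \<and>
            (b * GG \<nu> \<alpha> l + c)\<^sup>2 - b\<^sup>2 * (g_star \<nu> \<alpha> l)\<^sup>2 \<le> E0 * (2 * b * g_star \<nu> \<alpha> l + E0)"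
    if l: "l \<in> {-pi..pi}" for l
  proof -
    have l': "\<bar>l\<bar> \<le> pi" using l by auto
    define x where "x = b * g_star \<nu> \<alpha> l"
    define e where "e = b * GG \<nu> \<alpha> l + c - x"
    have x0: "x \<ge> 0" unfolding x_def using g_star_pos[OF nu0 a(1), of l] b by simp
    have e0: "e \<ge> 0" unfolding e_def x_def using GG_bounds(1)[OF nu a(1) l'] b cpos
    proof -
      have "b * g_star \<nu> \<alpha> l \<le> b * GG \<nu> \<alpha> l"
        using GG_bounds(1)[OF nu a(1) l'] b by (intro mult_left_mono) auto
      thus "0 \<le> b * GG \<nu> \<alpha> l + c - b * g_star \<nu> \<alpha> l" using cpos by simp
    qed
    have "GG \<nu> \<alpha> l - g_star \<nu> \<alpha> l \<le> 2 * C_nu \<nu> * \<alpha> powr (2*\<nu>) * Zs"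
      using GG_bounds(2)[OF nu a(1) l'] by simp
    also have "\<dots> \<le> 2 * C_nu \<nu> * 1 * Zs"
      using ap C_nu_pos[OF nu0] Zs_nonneg by (intro mult_right_mono mult_left_mono) auto
    finally have "b * (GG \<nu> \<alpha> l - g_star \<nu> \<alpha> l) \<le> b * (2 * C_nu \<nu> * Zs)"
      using b by (intro mult_left_mono) auto
    hence eE: "e \<le> E0" unfolding e_def x_def E0_def by (simp add: algebra_simps)
    have eq: "(b * GG \<nu> \<alpha> l + c)\<^sup>2 - b\<^sup>2 * (g_star \<nu> \<alpha> l)\<^sup>2 = e * (2 * x + e)"
      unfolding e_def x_def by (simp add: algebra_simps power2_eq_square)
    have "e * (2 * x + e) \<le> E0 * (2 * x + E0)"
      using e0 eE x0 by (intro mult_mono) auto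
    thus ?thesis unfolding eq using e0 x0 by (simp add: x_def mult.assoc)
  qed
  have cGG: "continuous_on {-pi..pi} (GG \<nu> \<alpha>)" by (rule cont_GG[OF nu a(1)])
  have i1: "(\<lambda>l. (b * GG \<nu> \<alpha> l + c)\<^sup>2 - b\<^sup>2 * (g_star \<nu> \<alpha> l)\<^sup>2) integrable_on {-pi..pi}"
    by (intro integrable_continuous_interval continuous_intros cGG cont_g_star a)
  have i2: "(\<lambda>l. E0 * (2 * b * g_star \<nu> \<alpha> l + E0)) integrable_on {-pi..pi}"
    by (intro integrable_continuous_interval continuous_intros cont_g_star a)
  show "0 \<le> integral {-pi..pi} (\<lambda>l. (b * GG \<nu> \<alpha> l + c)\<^sup>2 - b\<^sup>2 * (g_star \<nu> \<alpha> l)\<^sup>2)"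
    by (rule integral_nonneg[OF i1]) (use pw in auto)
  have "integral {-pi..pi} (\<lambda>l. (b * GG \<nu> \<alpha> l + c)\<^sup>2 - b\<^sup>2 * (g_star \<nu> \<alpha> l)\<^sup>2)
     \<le> integral {-pi..pi} (\<lambda>l. E0 * (2 * b * g_star \<nu> \<alpha> l + E0))"
    by (rule integral_le[OF i1 i2]) (use pw in auto)
  also have "\<dots> = E0 * (2 * b * integral {-pi..pi} (g_star \<nu> \<alpha>) + 2 * pi * E0)"
  proof -
    have ig: "g_star \<nu> \<alpha> integrable_on {-pi..pi}"
      by (intro integrable_continuous_interval cont_g_star a)
    have "integral {-pi..pi} (\<lambda>l. E0 * (2 * b * g_star \<nu> \<alpha> l + E0))
        = E0 * integral {-pi..pi} (\<lambda>l. 2 * b * g_star \<nu> \<alpha> l + E0)" by (rule integral_cmult_real)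
    also have "integral {-pi..pi} (\<lambda>l. 2 * b * g_star \<nu> \<alpha> l + E0)
        = integral {-pi..pi} (\<lambda>l. 2 * b * g_star \<nu> \<alpha> l) + integral {-pi..pi} (\<lambda>l. E0)"
      by (rule integral_add) (use ig integrable_on_cmult_left[OF ig, of "2*b"] in \<open>auto simp: mult.commute\<close>)
    also have "integral {-pi..pi} (\<lambda>l. 2 * b * g_star \<nu> \<alpha> l) = 2 * b * integral {-pi..pi} (g_star \<nu> \<alpha>)"
      by (rule integral_cmult_real)
    also have "integral {-pi..pi} (\<lambda>l. E0) = 2 * pi * E0" by simp
    finally show ?thesis .
  qed
  also have "\<dots> \<le> E0 * (2 * b * (C_nu \<nu> * Beta (1/2) \<nu>) + 2 * pi * E0)"
  proof -
    have E0p: "E0 \<ge> 0" unfolding E0_def using b C_nu_pos[OF nu0] Zs_nonneg cpos by simp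
    show ?thesis using int_g_star[OF nu a(1)] E0p b
      by (intro mult_left_mono add_right_mono) auto
  qed
  also have "\<dots> = 2 * b * E0 * (C_nu \<nu> * Beta (1/2) \<nu>) + 2 * pi * E0\<^sup>2"
    by (simp add: algebra_simps power2_eq_square)
  finally show "integral {-pi..pi} (\<lambda>l. (b * GG \<nu> \<alpha> l + c)\<^sup>2 - b\<^sup>2 * (g_star \<nu> \<alpha> l)\<^sup>2)
       \<le> 2 * b * E0 * (C_nu \<nu> * Beta (1/2) \<nu>) + 2 * pi * E0\<^sup>2" .
qed

lemma V_lim:
  assumes nu: "\<nu> \<ge> 1/2" and b: "b > 0"
  shows "((\<lambda>\<alpha>. \<alpha> * integral {-pi..pi} (\<lambda>l. (b * GG \<nu> \<alpha> l + 1/(2*pi))\<^sup>2))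
           \<longlongrightarrow> b\<^sup>2 * (C_nu \<nu>)\<^sup>2 * Beta (1/2) (2*\<nu>+1/2)) (at_right 0)"
proof -
  define c where "c = 1/(2*pi)"
  define E0 where "E0 = b * (2 * C_nu \<nu> * Zs) + c"
  define K where "K = 2 * b * E0 * (C_nu \<nu> * Beta (1/2) \<nu>) + 2 * pi * E0\<^sup>2"
  define T where "T \<alpha> = integral UNIV (\<lambda>u. if u \<in> {-pi/\<alpha>..pi/\<alpha>} then phis (2*\<nu>+1) u else 0)" for \<alpha>
  define R where "R \<alpha> = integral {-pi..pi} (\<lambda>l. (b * GG \<nu> \<alpha> l + c)\<^sup>2 - b\<^sup>2 * (g_star \<nu> \<alpha> l)\<^sup>2)" for \<alpha>
  have decomp: "\<alpha> * integral {-pi..pi} (\<lambda>l. (b * GG \<nu> \<alpha> l + c)\<^sup>2) = b\<^sup>2 * (C_nu \<nu>)\<^sup>2 * T \<alpha> + \<alpha> * R \<alpha>"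
    if a: "\<alpha> > 0" for \<alpha>
  proof -
    have iA: "(\<lambda>l. (b * GG \<nu> \<alpha> l + c)\<^sup>2) integrable_on {-pi..pi}"
      by (intro integrable_continuous_interval continuous_intros cont_GG[OF nu a])
    have iB: "(\<lambda>l. b\<^sup>2 * (g_star \<nu> \<alpha> l)\<^sup>2) integrable_on {-pi..pi}"
      by (intro integrable_continuous_interval continuous_intros cont_g_star a)
    define A where "A = integral {-pi..pi} (\<lambda>l. (b * GG \<nu> \<alpha> l + c)\<^sup>2)"
    define B where "B = integral {-pi..pi} (\<lambda>l. b\<^sup>2 * (g_star \<nu> \<alpha> l)\<^sup>2)"
    have "R \<alpha> = A - B"
      unfolding R_def A_def B_def by (rule integral_diff[OF iA iB])
    hence "A = B + R \<alpha>" by linarith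
    hence "\<alpha> * A = \<alpha> * B + \<alpha> * R \<alpha>" by (simp only: distrib_left)
    moreover have "\<alpha> * B = b\<^sup>2 * (C_nu \<nu>)\<^sup>2 * T \<alpha>" unfolding B_def T_def by (rule main_V[OF nu a])
    ultimately show ?thesis unfolding A_def by linarith
  qed
  have lim1: "((\<lambda>\<alpha>. b\<^sup>2 * (C_nu \<nu>)\<^sup>2 * T \<alpha>) \<longlongrightarrow> b\<^sup>2 * (C_nu \<nu>)\<^sup>2 * Beta (1/2) (2*\<nu>+1/2)) (at_right 0)"
  proof -
    have "(T \<longlongrightarrow> Beta (1/2) (2*\<nu>+1 - 1/2)) (at_right 0)"
      unfolding T_def[abs_def] by (rule trunc_lim) (use nu in simp)
    moreover have "2*\<nu>+1 - 1/2 = 2*\<nu>+1/2" by simp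
    ultimately show ?thesis by (intro tendsto_mult_left) simp
  qed
  have lim2: "((\<lambda>\<alpha>. \<alpha> * R \<alpha>) \<longlongrightarrow> 0) (at_right 0)"
  proof (rule tendsto_sandwich[of "\<lambda>_. 0" _ _ "\<lambda>\<alpha>. \<alpha> * K"])
    have ev: "eventually (\<lambda>\<alpha>. 0 < \<alpha> \<and> \<alpha> < 1) (at_right (0::real))"
      using eventually_in_range[of 1 0, OF zero_less_one] by eventually_elim auto
    show "eventually (\<lambda>\<alpha>. 0 \<le> \<alpha> * R \<alpha>) (at_right 0)"
      using ev by eventually_elim (use rem_V(1)[OF nu b] in \<open>auto simp: R_def c_def\<close>)
    show "eventually (\<lambda>\<alpha>. \<alpha> * R \<alpha> \<le> \<alpha> * K) (at_right 0)"
      using ev by eventually_elim (use rem_V(2)[OF nu b] in \<open>auto simp: R_def c_def K_def E0_def intro!: mult_left_mono\<close>)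
    show "((\<lambda>_. 0) \<longlongrightarrow> (0::real)) (at_right 0)" by simp
    have "((\<lambda>\<alpha>. \<alpha> * K) \<longlongrightarrow> 0 * K) (at_right (0::real))"
      by (intro tendsto_mult tendsto_const) (simp add: tendsto_ident_at)
    thus "((\<lambda>\<alpha>. \<alpha> * K) \<longlongrightarrow> 0) (at_right (0::real))" by simp
  qed
  have "((\<lambda>\<alpha>. b\<^sup>2 * (C_nu \<nu>)\<^sup>2 * T \<alpha> + \<alpha> * R \<alpha>) \<longlongrightarrow> b\<^sup>2 * (C_nu \<nu>)\<^sup>2 * Beta (1/2) (2*\<nu>+1/2) + 0) (at_right 0)"
    by (rule tendsto_add[OF lim1 lim2])
  hence "((\<lambda>\<alpha>. b\<^sup>2 * (C_nu \<nu>)\<^sup>2 * T \<alpha> + \<alpha> * R \<alpha>) \<longlongrightarrow> b\<^sup>2 * (C_nu \<nu>)\<^sup>2 * Beta (1/2) (2*\<nu>+1/2)) (at_right 0)"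
    by simp
  moreover have "eventually (\<lambda>\<alpha>. b\<^sup>2 * (C_nu \<nu>)\<^sup>2 * T \<alpha> + \<alpha> * R \<alpha> = \<alpha> * integral {-pi..pi} (\<lambda>l. (b * GG \<nu> \<alpha> l + 1/(2*pi))\<^sup>2)) (at_right 0)"
    using eventually_at_right_less[of 0] by eventually_elim (use decomp in \<open>auto simp: c_def\<close>)
  ultimately show ?thesis by (rule Lim_transform_eventually)
qed

lemma ratio_u: "(\<alpha>::real) > 0 \<Longrightarrow> \<alpha>\<^sup>2 / (\<alpha>\<^sup>2 + (\<alpha>*u)\<^sup>2) = 1 / (1 + u\<^sup>2)"
proof -
  assume a: "\<alpha> > 0"
  have e: "\<alpha>\<^sup>2 + (\<alpha>*u)\<^sup>2 = \<alpha>\<^sup>2 * (1 + u\<^sup>2)" by (simp add: power_mult_distrib algebra_simps)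
  have p: "\<alpha>\<^sup>2 > 0" "1 + u\<^sup>2 > 0" using a by (auto simp: add_pos_nonneg)
  show ?thesis unfolding e by (rule nonzero_divide_mult_cancel_left) (use p in auto)
qed

definition PP :: "real \<Rightarrow> real \<Rightarrow> real \<Rightarrow> real \<Rightarrow> real" where
  "PP \<nu> b \<alpha> l = (b * NN \<nu> \<alpha> l / (b * GG \<nu> \<alpha> l + 1/(2*pi)))\<^sup>2"

lemma cont_PP:
  assumes nu: "\<nu> \<ge> 1/2" and b: "b > 0" and a: "\<alpha> > 0"
  shows "continuous_on {-pi..pi} (PP \<nu> b \<alpha>)"
proof -
  have "\<forall>l\<in>{-pi..pi}. b * GG \<nu> \<alpha> l + 1/(2*pi) \<noteq> 0"
  proof
    fix l :: real assume "l \<in> {-pi..pi}"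
    hence "\<bar>l\<bar> \<le> pi" by auto
    hence "GG \<nu> \<alpha> l > 0" by (rule GG_bounds(3)[OF nu a])
    hence "b * GG \<nu> \<alpha> l > 0" using b by simp
    moreover have "1/(2*pi) > 0" by simp
    ultimately show "b * GG \<nu> \<alpha> l + 1/(2*pi) \<noteq> 0" by linarith
  qed
  thus ?thesis unfolding PP_def[abs_def]
    by (intro continuous_intros cont_GG cont_NN nu a) auto
qed

lemma PP_upper:
  assumes nu: "\<nu> \<ge> 1/2" and b: "b > 0" and a: "\<alpha> > 0" and l: "\<bar>\<alpha>*u\<bar> \<le> pi"
  shows "0 \<le> PP \<nu> b \<alpha> (\<alpha>*u)" "PP \<nu> b \<alpha> (\<alpha>*u) \<le> phis 2 u"
proof -
  define G where "G = GG \<nu> \<alpha> (\<alpha>*u)"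
  define N where "N = NN \<nu> \<alpha> (\<alpha>*u)"
  define c where "c = 1/(2*pi)"
  have G: "G > 0" unfolding G_def by (rule GG_bounds(3)[OF nu a l])
  have gs: "g_star \<nu> \<alpha> (\<alpha>*u) > 0" using g_star_pos[of \<nu> \<alpha>] nu a by simp
  have r: "\<alpha>\<^sup>2 / (\<alpha>\<^sup>2 + (\<alpha>*u)\<^sup>2) = 1 / (1 + u\<^sup>2)" by (rule ratio_u[OF a])
  have "0 \<le> g_star \<nu> \<alpha> (\<alpha>*u) * (\<alpha>\<^sup>2 / (\<alpha>\<^sup>2 + (\<alpha>*u)\<^sup>2))"
    unfolding r using gs by (simp add: add_pos_nonneg)
  hence N0: "N \<ge> 0" unfolding N_def using NN_bounds(1)[OF nu a l] by linarith
  have NG: "N \<le> 1 / (1 + u\<^sup>2) * G" unfolding N_def G_def using NN_bounds(2)[OF nu a l] r by simp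
  have c: "c > 0" unfolding c_def by simp
  have q0: "0 \<le> b * N / (b * G + c)" using N0 G b c by simp
  have "b * N / (b * G + c) \<le> b * N / (b * G)"
    using N0 G b c by (intro divide_left_mono) (auto intro!: mult_pos_pos add_pos_pos)
  also have "\<dots> = N / G" using b by simp
  also have "\<dots> \<le> 1 / (1 + u\<^sup>2)" using NG G by (simp add: divide_le_eq)
  finally have q1: "b * N / (b * G + c) \<le> 1 / (1 + u\<^sup>2)" .
  show "0 \<le> PP \<nu> b \<alpha> (\<alpha>*u)" unfolding PP_def by simp
  have "(b * N / (b * G + c))\<^sup>2 \<le> (1 / (1 + u\<^sup>2))\<^sup>2" by (rule power_mono[OF q1 q0])
  thus "PP \<nu> b \<alpha> (\<alpha>*u) \<le> phis 2 u" unfolding PP_def phis_2 N_def G_def c_def .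
qed

lemma PP_lower:
  assumes nu: "\<nu> \<ge> 1/2" and b: "b > 0" and a: "\<alpha> > 0" "\<alpha> < 1" and l: "\<bar>\<alpha>*u\<bar> \<le> pi"
  defines "E0 \<equiv> b * (2 * C_nu \<nu> * Zs) + 1/(2*pi)"
  shows "phis 2 u * (b * C_nu \<nu> * phis (\<nu>+1/2) u / (b * C_nu \<nu> * phis (\<nu>+1/2) u + \<alpha> * E0))\<^sup>2
         \<le> PP \<nu> b \<alpha> (\<alpha>*u)"
proof -
  have nu0: "\<nu> > 0" using nu by simp
  define G where "G = GG \<nu> \<alpha> (\<alpha>*u)"
  define N where "N = NN \<nu> \<alpha> (\<alpha>*u)"
  define G0 where "G0 = g_star \<nu> \<alpha> (\<alpha>*u)"
  define c where "c = 1/(2*pi)"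
  define p3 where "p3 = phis (\<nu>+1/2) u"
  define C where "C = C_nu \<nu>"
  define r where "r = 1 / (1 + u\<^sup>2)"
  have Cp: "C > 0" unfolding C_def by (rule C_nu_pos[OF nu0])
  have "1 + u\<^sup>2 > 0" by (simp add: add_pos_nonneg)
  hence p3: "p3 > 0" unfolding p3_def phis_def by simp
  have rp: "r > 0" unfolding r_def by (simp add: add_pos_nonneg)
  have c: "c > 0" unfolding c_def by simp
  have G0: "G0 = C / \<alpha> * p3" unfolding G0_def C_def p3_def phis_def by (rule g_star_scale[OF a(1)])
  have G0p: "G0 > 0" unfolding G0 using Cp p3 a by simp
  have rr: "\<alpha>\<^sup>2 / (\<alpha>\<^sup>2 + (\<alpha>*u)\<^sup>2) = r"
    unfolding r_def by (rule ratio_u[OF a(1)])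
  have N1: "G0 * r \<le> N" unfolding N_def G0_def using NN_bounds(1)[OF nu a(1) l] rr by simp
  have ap: "\<alpha> powr (2*\<nu>) \<le> 1" using powr_mono2[of "2*\<nu>" \<alpha> 1] a nu0 by simp
  have Zs: "Zs \<ge> 0" by (rule Zs_nonneg)
  have "G \<le> G0 + 2 * C * \<alpha> powr (2*\<nu>) * Zs" unfolding G_def G0_def C_def by (rule GG_bounds(2)[OF nu a(1) l])
  also have "\<dots> \<le> G0 + 2 * C * 1 * Zs"
    using ap Cp Zs by (intro add_left_mono mult_right_mono mult_left_mono) auto
  finally have "G \<le> G0 + 2 * C * 1 * Zs" .
  hence "b * G \<le> b * (G0 + 2 * C * 1 * Zs)" using b by (intro mult_left_mono) auto
  hence G1: "b * G + c \<le> b * G0 + E0"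
    unfolding E0_def C_def[symmetric] c_def[symmetric] by (simp add: algebra_simps)
  have Gp: "G > 0" unfolding G_def by (rule GG_bounds(3)[OF nu a(1) l])
  have E0p: "E0 \<ge> 0" unfolding E0_def using b Cp Zs C_def by simp
  have "b * G0 * r / (b * G0 + E0) \<le> b * N / (b * G + c)"
  proof (rule frac_le)
    show "0 \<le> b * N" using N1 G0p rp b by (metis mult_nonneg_nonneg less_imp_le order_trans)
    show "b * G0 * r \<le> b * N" using N1 b by (simp add: mult.assoc)
    show "0 < b * G + c" using b Gp c by (metis add_pos_pos mult_pos_pos)
    show "b * G + c \<le> b * G0 + E0" by (rule G1)
  qed
  moreover have "b * G0 * r / (b * G0 + E0) = r * (b * C * p3 / (b * C * p3 + \<alpha> * E0))"
    unfolding G0 using a b Cp p3 E0p by (simp add: field_simps)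
  ultimately have q: "r * (b * C * p3 / (b * C * p3 + \<alpha> * E0)) \<le> b * N / (b * G + c)" by simp
  have q0: "0 \<le> r * (b * C * p3 / (b * C * p3 + \<alpha> * E0))"
    using rp b Cp p3 E0p a by simp
  have "(r * (b * C * p3 / (b * C * p3 + \<alpha> * E0)))\<^sup>2 \<le> (b * N / (b * G + c))\<^sup>2"
    by (rule power_mono[OF q q0])
  moreover have "(r * (b * C * p3 / (b * C * p3 + \<alpha> * E0)))\<^sup>2 = phis 2 u * (b * C * p3 / (b * C * p3 + \<alpha> * E0))\<^sup>2"
    unfolding phis_2 r_def by (rule power_mult_distrib)
  ultimately have "phis 2 u * (b * C * p3 / (b * C * p3 + \<alpha> * E0))\<^sup>2 \<le> (b * N / (b * G + c))\<^sup>2"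
    by linarith
  thus ?thesis unfolding PP_def N_def G_def c_def C_def p3_def .
qed

lemma in_range_abs: "\<alpha> > 0 \<Longrightarrow> u \<in> {-pi/\<alpha>..pi/\<alpha>} \<Longrightarrow> \<bar>\<alpha>*u\<bar> \<le> pi"
proof -
  assume a: "\<alpha> > 0" and u: "u \<in> {-pi/\<alpha>..pi/\<alpha>}"
  hence "\<bar>u\<bar> \<le> pi/\<alpha>" by auto
  hence "\<alpha> * \<bar>u\<bar> \<le> pi" using a by (simp add: field_simps)
  thus ?thesis using a by (simp add: abs_mult)
qed

lemma S_lim:
  assumes nu: "\<nu> \<ge> 1/2" and b: "b > 0"
  shows "((\<lambda>\<alpha>. integral {-pi..pi} (PP \<nu> b \<alpha>) / \<alpha>) \<longlongrightarrow> Beta (1/2) (3/2)) (at_right 0)"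
proof -
  have nu0: "\<nu> > 0" using nu by simp
  define f where "f \<alpha> u = (if u \<in> {-pi/\<alpha>..pi/\<alpha>} then PP \<nu> b \<alpha> (\<alpha>*u) else 0)" for \<alpha> u
  define E0 where "E0 = b * (2 * C_nu \<nu> * Zs) + 1/(2*pi)"
  have eqv: "integral {-pi..pi} (PP \<nu> b \<alpha>) / \<alpha> = integral UNIV (f \<alpha>)" if a: "\<alpha> > 0" for \<alpha>
    using scale_int(2)[OF a cont_PP[OF nu b a]] a unfolding f_def[abs_def] by simp
  have "((\<lambda>\<alpha>. integral UNIV (f \<alpha>)) \<longlongrightarrow> integral UNIV (phis 2)) (at_right 0)"
  proof (rule DC_right)
    show "phis 2 integrable_on UNIV" by (rule phis_int(1)) simp
    show "f \<alpha> integrable_on UNIV" if "0 < \<alpha>" "\<alpha> < 1" for \<alpha>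
      unfolding f_def[abs_def] by (rule scale_int(1)[OF that(1) cont_PP[OF nu b that(1)]])
    show "\<bar>f \<alpha> u\<bar> \<le> phis 2 u" if "0 < \<alpha>" "\<alpha> < 1" for \<alpha> u
    proof (cases "u \<in> {-pi/\<alpha>..pi/\<alpha>}")
      case True
      note l = in_range_abs[OF that(1) True]
      show ?thesis using PP_upper[OF nu b that(1) l] True by (simp add: f_def)
    next
      case False
      thus ?thesis unfolding f_def by (simp only: if_False) (simp add: phis_nonneg)
    qed
    show "((\<lambda>\<alpha>. f \<alpha> u) \<longlongrightarrow> phis 2 u) (at_right 0)" for u
    proof -
      define p where "p = b * C_nu \<nu> * phis (\<nu>+1/2) u"
      have "1 + u\<^sup>2 > 0" by (simp add: add_pos_nonneg)
      hence "phis (\<nu>+1/2) u > 0" unfolding phis_def by simp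
      hence pp: "p > 0" unfolding p_def using b C_nu_pos[OF nu0] by simp
      define L where "L \<alpha> = phis 2 u * (p / (p + \<alpha> * E0))\<^sup>2" for \<alpha>
      have "(L \<longlongrightarrow> phis 2 u * (p / (p + 0 * E0))\<^sup>2) (at_right 0)"
        unfolding L_def[abs_def] using pp
        by (intro tendsto_intros) (auto simp: tendsto_ident_at)
      hence limL: "(L \<longlongrightarrow> phis 2 u) (at_right 0)" using pp by simp
      have ev: "eventually (\<lambda>\<alpha>. 0 < \<alpha> \<and> \<alpha> < 1 \<and> u \<in> {-pi/\<alpha>..pi/\<alpha>}) (at_right 0)"
        by (rule eventually_in_range) simp
      show ?thesis
      proof (rule tendsto_sandwich[OF _ _ limL tendsto_const])
        show "eventually (\<lambda>\<alpha>. L \<alpha> \<le> f \<alpha> u) (at_right 0)"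
          using ev
        proof eventually_elim
          case (elim \<alpha>)
          hence l: "\<bar>\<alpha>*u\<bar> \<le> pi" by (intro in_range_abs) auto
          show ?case using PP_lower[OF nu b _ _ l] elim
            unfolding L_def f_def p_def E0_def by simp
        qed
        show "eventually (\<lambda>\<alpha>. f \<alpha> u \<le> phis 2 u) (at_right 0)"
          using ev
        proof eventually_elim
          case (elim \<alpha>)
          hence l: "\<bar>\<alpha>*u\<bar> \<le> pi" by (intro in_range_abs) auto
          show ?case using PP_upper[OF nu b _ l] elim unfolding f_def by simp
        qed
      qed
    qed
  qed
  moreover have "integral UNIV (phis 2) = Beta (1/2) (3/2)"
    using phis_int(2)[of 2] by simp
  ultimately have "((\<lambda>\<alpha>. integral UNIV (f \<alpha>)) \<longlongrightarrow> Beta (1/2) (3/2)) (at_right 0)" by simp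
  moreover have "eventually (\<lambda>\<alpha>. integral UNIV (f \<alpha>) = integral {-pi..pi} (PP \<nu> b \<alpha>) / \<alpha>) (at_right 0)"
    using eventually_at_right_less[of 0] by eventually_elim (use eqv in auto)
  ultimately show ?thesis by (rule Lim_transform_eventually)
qed

lemma pw1:
  assumes nu: "\<nu> \<ge> 1/2" and b: "b > 0" and d: "\<delta> > 0" and th: "\<theta>0 > 0" and l: "\<bar>l\<bar> \<le> pi"
  shows "(a_delta \<nu> \<delta> b \<theta>0 l) powi (-2) * (g_delta \<nu> \<delta> \<theta>0 l)\<^sup>2
         = (1/b\<^sup>2) * (b * GG \<nu> (\<delta>*\<theta>0) l + 1/(2*pi))\<^sup>2"
proof -
  have dt: "\<delta>*\<theta>0 > 0" using d th by simp
  define G where "G = GG \<nu> (\<delta>*\<theta>0) l"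
  define c where "c = 1/(2*pi)"
  have G: "G > 0" unfolding G_def by (rule GG_bounds(3)[OF nu dt l])
  have c: "c > 0" unfolding c_def by simp
  have g: "g_delta \<nu> \<delta> \<theta>0 l = G" unfolding G_def by (rule g_delta_GG[OF nu dt l])
  have a: "a_delta \<nu> \<delta> b \<theta>0 l = b * G / (b * G + c)" unfolding a_delta_def g c_def ..
  have bG: "b * G + c > 0" using b G c by (metis add_pos_pos mult_pos_pos)
  have "(b * G / (b * G + c)) powi (-2) = inverse ((b * G / (b * G + c))^2)"
    by (simp add: power_int_minus)
  also have "\<dots> = (b * G + c)\<^sup>2 / (b * G)\<^sup>2" by (simp add: power_divide)
  finally show ?thesis unfolding a g G_def[symmetric] c_def[symmetric] using b G bG
    by (simp add: field_simps power2_eq_square)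
qed

lemma pw2:
  assumes nu: "\<nu> \<ge> 1/2" and b: "b > 0" and d: "\<delta> > 0" and th: "\<theta>0 > 0" and l: "\<bar>l\<bar> \<le> pi"
  shows "(a_delta \<nu> \<delta> b \<theta>0 l)\<^sup>2 * (h_delta \<nu> \<delta> \<theta>0 l - 2*\<nu>/\<theta>0)\<^sup>2
         = ((2*\<nu>+1)/\<theta>0)\<^sup>2 * PP \<nu> b (\<delta>*\<theta>0) l"
proof -
  have dt: "\<delta>*\<theta>0 > 0" using d th by simp
  define G where "G = GG \<nu> (\<delta>*\<theta>0) l"
  define N where "N = NN \<nu> (\<delta>*\<theta>0) l"
  define c where "c = 1/(2*pi)"
  have G: "G > 0" unfolding G_def by (rule GG_bounds(3)[OF nu dt l])
  have c: "c > 0" unfolding c_def by simp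
  have g: "g_delta \<nu> \<delta> \<theta>0 l = G" unfolding G_def by (rule g_delta_GG[OF nu dt l])
  have a: "a_delta \<nu> \<delta> b \<theta>0 l = b * G / (b * G + c)" unfolding a_delta_def g c_def ..
  have h: "h_delta \<nu> \<delta> \<theta>0 l - 2*\<nu>/\<theta>0 = - ((2*\<nu>+1)/\<theta>0 * (N / G))"
    unfolding N_def G_def using h_delta_eq[OF nu d th l] by simp
  have bG: "b * G + c > 0" using b G c by (metis add_pos_pos mult_pos_pos)
  have e1: "b * G / (b * G + c) * (N / G) = b * N / (b * G + c)" using G bG by (simp add: field_simps)
  have ri: "(x::real)^2 * (-(k*y))^2 = k^2*(x*y)^2" for x k y by (simp add: power2_eq_square algebra_simps)
  have "(b * G / (b * G + c))\<^sup>2 * (- ((2*\<nu>+1)/\<theta>0 * (N / G)))\<^sup>2 = ((2*\<nu>+1)/\<theta>0)\<^sup>2 * (b * N / (b * G + c))\<^sup>2"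
    unfolding ri e1 ..
  thus ?thesis unfolding a h PP_def N_def[symmetric] G_def[symmetric] c_def[symmetric] .
qed

lemma I4_eq:
  assumes nu: "\<nu> \<ge> 1/2" and b: "b > 0" and d: "\<delta> > 0" and th: "\<theta>0 > 0"
  shows "I4 \<nu> \<delta> b \<theta>0 = ((2*\<nu>+1)/(2*\<nu>))\<^sup>2 / b\<^sup>2 *
     ((\<delta>*\<theta>0) * integral {-pi..pi} (\<lambda>l. (b * GG \<nu> (\<delta>*\<theta>0) l + 1/(2*pi))\<^sup>2)) *
     (integral {-pi..pi} (PP \<nu> b (\<delta>*\<theta>0)) / (\<delta>*\<theta>0))"
proof -
  define \<alpha> where "\<alpha> = \<delta>*\<theta>0"
  have a: "\<alpha> > 0" unfolding \<alpha>_def using d th by simp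
  define V where "V = integral {-pi..pi} (\<lambda>l. (b * GG \<nu> \<alpha> l + 1/(2*pi))\<^sup>2)"
  define S where "S = integral {-pi..pi} (PP \<nu> b \<alpha>)"
  have "v1 \<nu> \<delta> b \<theta>0 = b\<^sup>2 * integral {-pi..pi} (\<lambda>l. (1/b\<^sup>2) * (b * GG \<nu> \<alpha> l + 1/(2*pi))\<^sup>2)"
    unfolding v1_def \<alpha>_def by (rule arg_cong[where f="\<lambda>x. b\<^sup>2 * x"], rule integral_cong) (use pw1[OF nu b d th] in auto)
  also have "\<dots> = V" unfolding V_def integral_cmult_real using b by simp
  finally have v: "v1 \<nu> \<delta> b \<theta>0 = V" .
  have "sigma4_sq \<nu> \<delta> b \<theta>0 = b\<^sup>2 * (2*\<nu>/\<theta>0)\<^sup>2 * inverse (integral {-pi..pi} (\<lambda>l. ((2*\<nu>+1)/\<theta>0)\<^sup>2 * PP \<nu> b \<alpha> l))"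
    unfolding sigma4_sq_def \<alpha>_def
    by (rule arg_cong[where f="\<lambda>x. b\<^sup>2 * (2*\<nu>/\<theta>0)\<^sup>2 * inverse x"], rule integral_cong) (use pw2[OF nu b d th] in auto)
  also have "\<dots> = b\<^sup>2 * (2*\<nu>/\<theta>0)\<^sup>2 * inverse (((2*\<nu>+1)/\<theta>0)\<^sup>2 * S)"
    unfolding S_def integral_cmult_real ..
  finally have s: "sigma4_sq \<nu> \<delta> b \<theta>0 = b\<^sup>2 * (2*\<nu>/\<theta>0)\<^sup>2 * inverse (((2*\<nu>+1)/\<theta>0)\<^sup>2 * S)" .
  have nu0: "\<nu> > 0" using nu by simp
  have "I4 \<nu> \<delta> b \<theta>0 = ((2*\<nu>+1)/(2*\<nu>))\<^sup>2 / b\<^sup>2 * (\<alpha> * V) * (S / \<alpha>)"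
  proof (cases "S = 0")
    case True
    thus ?thesis unfolding I4_def v s by simp
  next
    case False
    thus ?thesis unfolding I4_def v s using a b th nu0
      by (simp add: field_simps power2_eq_square)
  qed
  thus ?thesis unfolding \<alpha>_def V_def S_def .
qed

lemma ineff_alg:
  fixes b \<nu> A Bg Gn G2 s :: real
  assumes "b > 0" "\<nu> > 0" "Gn > 0" "G2 > 0" "s > 0"
  shows "((2*\<nu>+1)/(2*\<nu>))\<^sup>2 / b\<^sup>2 * (b\<^sup>2 * (A / (s * Gn))\<^sup>2 * (s * Bg / G2)) * (s * s / 2)
       = s / 2 * ((2*\<nu>+1)/(2*\<nu>))\<^sup>2 * (A\<^sup>2 * Bg) / (Gn\<^sup>2 * G2)"
  using assms by (simp add: field_simps power2_eq_square)

lemma ineff_val: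
  assumes nu: "\<nu> \<ge> 1/2" and that: "b > 0"
  shows "((2*\<nu>+1)/(2*\<nu>))\<^sup>2 / b\<^sup>2 * (b\<^sup>2 * (C_nu \<nu>)\<^sup>2 * Beta (1/2) (2*\<nu>+1/2)) * Beta (1/2) (3/2) = ineff \<nu>"
proof -
  have nu0: "\<nu> > 0" using nu by simp
  have g32: "Gamma (3/2 :: real) = sqrt pi / 2"
  proof -
    have "(1/2::real) \<notin> \<int>\<^sub>\<le>\<^sub>0" by (auto dest: nonpos_Ints_nonpos)
    thus ?thesis using Gamma_plus1[of "1/2 :: real"] Gamma_one_half_real by simp
  qed
  have g2: "Gamma (2 :: real) = 1" using Gamma_fact[of 1, where 'a=real] by simp
  have "Beta (1/2) (3/2 :: real) = sqrt pi * (sqrt pi / 2) / Gamma 2"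
    unfolding Beta_def g32 Gamma_one_half_real by simp
  also have "\<dots> = pi / 2" unfolding g2 by simp
  finally have B2: "Beta (1/2) (3/2 :: real) = pi / 2" .
  have B1: "Beta (1/2) (2*\<nu>+1/2) = sqrt pi * Gamma (2*\<nu>+1/2) / Gamma (2*\<nu>+1)"
    unfolding Beta_def Gamma_one_half_real by (simp add: add_ac)
  have G1: "Gamma \<nu> > 0" "Gamma (2*\<nu>+1) > 0" using nu0 by (auto intro!: Gamma_real_pos)
  have sp: "sqrt pi > 0" "(sqrt pi)\<^sup>2 = pi" by auto
  have B2': "Beta (1/2) (3/2 :: real) = sqrt pi * sqrt pi / 2" unfolding B2 by simp
  show ?thesis unfolding B1 B2' ineff_def C_nu_def
    by (rule ineff_alg) (use that G1 sp nu0 in auto)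
qed

theorem theorem4p4:
  fixes \<nu> b0 \<theta>0 :: real
  assumes "\<nu> \<ge> 1/2" and "b0 > 0" and "\<theta>0 > 0"
  shows "((\<lambda>\<delta>. I4 \<nu> \<delta> b0 \<theta>0) \<longlongrightarrow> ineff \<nu>) (at_right 0)"
proof -
  note nu = assms(1) and b = assms(2) and th = assms(3)
  define F where "F \<alpha> = ((2*\<nu>+1)/(2*\<nu>))\<^sup>2 / b0\<^sup>2 *
     (\<alpha> * integral {-pi..pi} (\<lambda>l. (b0 * GG \<nu> \<alpha> l + 1/(2*pi))\<^sup>2)) *
     (integral {-pi..pi} (PP \<nu> b0 \<alpha>) / \<alpha>)" for \<alpha>
  have "(F \<longlongrightarrow> ((2*\<nu>+1)/(2*\<nu>))\<^sup>2 / b0\<^sup>2 * (b0\<^sup>2 * (C_nu \<nu>)\<^sup>2 * Beta (1/2) (2*\<nu>+1/2)) * Beta (1/2) (3/2)) (at_right 0)"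
    unfolding F_def[abs_def] by (intro tendsto_mult tendsto_const V_lim[OF nu b] S_lim[OF nu b])
  hence limF: "(F \<longlongrightarrow> ineff \<nu>) (at_right 0)" using ineff_val[OF nu b] by simp
  have fl: "filterlim (\<lambda>\<delta>. \<delta> * \<theta>0) (at_right 0) (at_right 0)"
  proof -
    have "((\<lambda>\<delta>. \<delta> * \<theta>0) \<longlongrightarrow> 0 * \<theta>0) (at_right (0::real))"
      by (intro tendsto_intros)
    moreover have "eventually (\<lambda>\<delta>. \<delta> * \<theta>0 \<in> {0<..} \<and> \<delta> * \<theta>0 \<noteq> 0) (at_right (0::real))"
      using eventually_at_right_less[of 0] by eventually_elim (use th in auto)
    ultimately show ?thesis unfolding filterlim_at by simp
  qed
  have "((\<lambda>\<delta>. F (\<delta> * \<theta>0)) \<longlongrightarrow> ineff \<nu>) (at_right 0)"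
    by (rule filterlim_compose[OF limF fl])
  moreover have "eventually (\<lambda>\<delta>. F (\<delta> * \<theta>0) = I4 \<nu> \<delta> b0 \<theta>0) (at_right 0)"
    using eventually_at_right_less[of 0] by eventually_elim (use I4_eq[OF nu b _ th] in \<open>auto simp: F_def\<close>)
  ultimately show ?thesis by (rule Lim_transform_eventually)
qed

end
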